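(* $F_{\{1,2\}}=\emptyset$, and $\overline{F}_{\{1,2\}}$ consists of a single point, namely $\overline{F}_{\{1,2\}}=F_{\{1,2,3,5,10,11\}}=\{p_2\}$, where $p_2$ is the unique fixed point of $G_2$ in $H^2_\mathbb{C}$.
   Context: Hermitian form on $\mathbb{C}^3$: $\langle V,W\rangle=V_1\overline{W_3}+V_2\overline{W_2}+V_3\overline{W_1}$. Let $$G_1=\begin{pmatrix}1&1&-\frac{1+i\sqrt7}{2}\\0&1&-1\\0&0&1\end{pmatrix},\quad G_3=\begin{pmatrix}1&0&0\\-1&1&0\\ \frac{-1+i\sqrt7}{2}&1&1\end{pmatrix},\quad G_2=G_3G_1^{-1}G_3^{-1}G_1,$$ $Q=(1,0,0)^T$. Set $\gamma_1=G_2,\gamma_2=G_2^{-1},\gamma_3=G_3,\gamma_4=G_3^{-1}$ and, for $k\ge1$ and $1\le j\le4$, $\gamma_{8k-4+j}=G_1^k\gamma_jG_1^{-k}$, $\gamma_{8k+j}=G_1^{-k}\gamma_jG_1^{k}$. For $Z\in\mathbb{C}^3\setminus\{0\}$ let $f_0(Z)=\langle Z,Z\rangle$ and $f_j(Z)=|\langle Z,Q\rangle|^2-|\langle Z,\gamma_jQ\rangle|^2$ for $j\ge1$ (homogeneous, so their signs are defined on $\mathbb{C}P^2$). Let $I=\{0,1,2,\dots\}$. For disjoint $J,K\subset I$, $F_{J,K}=\{[Z]\in\mathbb{C}P^2: f_j(Z)=0\ \forall j\in J,\ f_i(Z)<0\ \forall i\in K\}$, $\overline{F}_{J,K}$ is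 defined likewise with $f_i\le0$ for $i\in K$, $F_J=F_{J,I\setminus J}$ and $\overline{F}_J=\overline{F}_{J,I\setminus J}$. *)

theory Defs
  imports "HOL-Analysis.Analysis"
begin

type_synonym cvec = "complex ^ 3"
type_synonym cmat = "complex ^ 3 ^ 3"

definition herm :: "cvec \<Rightarrow> cvec \<Rightarrow> complex" where
  "herm V W = V$1 * cnj (W$3) + V$2 * cnj (W$2) + V$3 * cnj (W$1)"

definition G1 :: cmat where
  "G1 = vector [vector [1, 1, - (1 + \<i> * complex_of_real (sqrt 7)) / 2],
                vector [0, 1, -1],
                vector [0, 0, 1]]"

definition G3 :: cmat where
  "G3 = vector [vector [1, 0, 0],
                vector [-1, 1, 0],
                vector [(-1 + \<i> * complex_of_real (sqrt 7)) / 2, 1, 1]]"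

definition G2 :: cmat where
  "G2 = G3 ** matrix_inv G1 ** matrix_inv G3 ** G1"

definition Qv :: cvec where
  "Qv = vector [1, 0, 0]"

fun mpow :: "cmat \<Rightarrow> nat \<Rightarrow> cmat" where
  "mpow A 0 = mat 1"
| "mpow A (Suc k) = A ** mpow A k"

definition gbase :: "nat \<Rightarrow> cmat" where
  "gbase j = (if j = 1 then G2 else if j = 2 then matrix_inv G2
              else if j = 3 then G3 else matrix_inv G3)"

text \<open>gamma (n) for n >= 1: gamma 1..4 = G2, G2^-1, G3, G3^-1;
  gamma (8k-4+j) = G1^k gamma j G1^-k, gamma (8k+j) = G1^-k gamma j G1^k.\<close>
definition gamma :: "nat \<Rightarrow> cmat" where
  "gamma n = (let m = (n - 1) div 4; j = (n - 1) mod 4 + 1 in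
     if m = 0 then gbase j
     else if odd m then mpow G1 ((m + 1) div 2) ** gbase j ** matrix_inv (mpow G1 ((m + 1) div 2))
     else matrix_inv (mpow G1 (m div 2)) ** gbase j ** mpow G1 (m div 2))"

definition f :: "nat \<Rightarrow> cvec \<Rightarrow> real" where
  "f j Z = (if j = 0 then Re (herm Z Z)
            else (cmod (herm Z Qv))\<^sup>2 - (cmod (herm Z (gamma j *v Qv)))\<^sup>2)"

text \<open>points of CP^2 are complex lines (without 0) through nonzero vectors\<close>
definition proj :: "cvec \<Rightarrow> cvec set" where
  "proj Z = {c *s Z | c. c \<noteq> 0}"

definition FJK :: "nat set \<Rightarrow> nat set \<Rightarrow> cvec set set" where
  "FJK J K = {proj Z | Z. Z \<noteq> 0 \<and> (\<forall>j\<in>J. f j Z = 0) \<and> (\<forall>i\<in>K. f i Z < 0)}"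

definition FJK_bar :: "nat set \<Rightarrow> nat set \<Rightarrow> cvec set set" where
  "FJK_bar J K = {proj Z | Z. Z \<noteq> 0 \<and> (\<forall>j\<in>J. f j Z = 0) \<and> (\<forall>i\<in>K. f i Z \<le> 0)}"

definition FJ :: "nat set \<Rightarrow> cvec set set" where
  "FJ J = FJK J (UNIV - J)"

definition FJ_bar :: "nat set \<Rightarrow> cvec set set" where
  "FJ_bar J = FJK_bar J (UNIV - J)"

definition H2C :: "cvec set set" where
  "H2C = {proj Z | Z. Z \<noteq> 0 \<and> Re (herm Z Z) < 0}"

definition fixed_points_H2C :: "cmat \<Rightarrow> cvec set set" where
  "fixed_points_H2C A = {proj Z | Z. Z \<noteq> 0 \<and> Re (herm Z Z) < 0 \<and> proj (A *v Z) = proj Z}"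

end

theory Submission
  imports Defs
begin

definition r7 :: real where "r7 = sqrt 7"
definition w :: complex where "w = (-1 + \<i> * complex_of_real r7) / 2"

lemma r7sq: "r7 * r7 = 7" by (simp add: r7_def)
lemma r7pos: "r7 > 0" by (simp add: r7_def)

lemma w_Re: "Re w = -1/2" and w_Im: "Im w = r7/2"
  by (simp_all add: w_def)

lemma w2: "w * w = - w - 2"
proof -
  have "complex_of_real r7 * complex_of_real r7 = 7"
    by (metis of_real_mult r7sq of_real_numeral)
  then show ?thesis unfolding w_def by (simp add: field_simps)
qed

lemma cnj_w: "cnj w = -1 - w"
  by (simp add: w_def complex_eq_iff)

definition mat3 :: "complex \<Rightarrow> complex \<Rightarrow> complex \<Rightarrow> complex \<Rightarrow> complex \<Rightarrow> complex \<Rightarrow> complex \<Rightarrow> complex \<Rightarrow> complex \<Rightarrow> cmat" where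
  "mat3 a1 a2 a3 b1 b2 b3 c1 c2 c3 = vector [vector [a1,a2,a3], vector [b1,b2,b3], vector [c1,c2,c3]]"

lemma mat3_mult: "mat3 a1 a2 a3 b1 b2 b3 c1 c2 c3 ** mat3 x1 x2 x3 y1 y2 y3 z1 z2 z3 =
  mat3 (a1*x1+a2*y1+a3*z1) (a1*x2+a2*y2+a3*z2) (a1*x3+a2*y3+a3*z3)
       (b1*x1+b2*y1+b3*z1) (b1*x2+b2*y2+b3*z2) (b1*x3+b2*y3+b3*z3)
       (c1*x1+c2*y1+c3*z1) (c1*x2+c2*y2+c3*z2) (c1*x3+c2*y3+c3*z3)"
  unfolding mat3_def by (simp add: matrix_matrix_mult_def vec_eq_iff forall_3 sum_3)

lemma mat3_vec: "mat3 a1 a2 a3 b1 b2 b3 c1 c2 c3 *v vector [x,y,z] =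
   (vector [a1*x+a2*y+a3*z, b1*x+b2*y+b3*z, c1*x+c2*y+c3*z] :: cvec)"
  unfolding mat3_def by (simp add: matrix_vector_mult_def vec_eq_iff forall_3 sum_3)

lemma mat3_eq: "mat3 a1 a2 a3 b1 b2 b3 c1 c2 c3 = mat3 x1 x2 x3 y1 y2 y3 z1 z2 z3 \<longleftrightarrow>
  a1 = x1 \<and> a2 = x2 \<and> a3 = x3 \<and> b1 = y1 \<and> b2 = y2 \<and> b3 = y3 \<and> c1 = z1 \<and> c2 = z2 \<and> c3 = z3"
  unfolding mat3_def by (simp add: vec_eq_iff forall_3)

lemma vec3_eq: "(vector [a,b,c] :: cvec) = vector [a',b',c'] \<longleftrightarrow> a = a' \<and> b = b' \<and> c = c'"
  by (simp add: vec_eq_iff forall_3)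

lemma mat1_3: "(mat 1 :: cmat) = mat3 1 0 0 0 1 0 0 0 1"
  unfolding mat3_def by (simp add: mat_def vec_eq_iff forall_3)

lemma herm3: "herm (vector [a,b,c]) (vector [x,y,z]) = a * cnj z + b * cnj y + c * cnj x"
  by (simp add: herm_def)

lemma scale3: "(k::complex) *s vector [a,b,c] = (vector [k*a,k*b,k*c] :: cvec)"
  by (simp add: vec_eq_iff forall_3)

lemma vec3_expand: "(Z::cvec) = vector [Z$1, Z$2, Z$3]"
  by (simp add: vec_eq_iff forall_3)

lemma matrix_inv_eq:
  fixes A B :: cmat
  assumes "A ** B = mat 1" "B ** A = mat 1"
  shows "matrix_inv A = B"
proof -
  have ex: "\<exists>A'. A ** A' = mat 1 \<and> A' ** A = mat 1" using assms by blast
  define C where "C = matrix_inv A"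
  have C: "A ** C = mat 1 \<and> C ** A = mat 1"
    unfolding C_def matrix_inv_def by (rule someI_ex[OF ex])
  have "C = C ** (A ** B)" using assms by (simp add: matrix_mul_rid)
  also have "\<dots> = (C ** A) ** B" by (simp add: matrix_mul_assoc)
  also have "\<dots> = B" using C by (simp add: matrix_mul_lid)
  finally show ?thesis unfolding C_def .
qed

lemma G1_eq: "G1 = mat3 1 1 (-1-w) 0 1 (-1) 0 0 1"
  unfolding G1_def mat3_def w_def r7_def by (simp add: vec3_eq field_simps)

lemma G3_eq: "G3 = mat3 1 0 0 (-1) 1 0 w 1 1"
  unfolding G3_def mat3_def w_def r7_def by (simp add: vec3_eq)

lemma G1inv: "matrix_inv G1 = mat3 1 (-1) w 0 1 1 0 0 1"
  by (rule matrix_inv_eq) (simp_all add: G1_eq mat3_mult mat1_3 mat3_eq)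

lemma G3inv: "matrix_inv G3 = mat3 1 0 0 1 1 0 (-1-w) (-1) 1"
  by (rule matrix_inv_eq) (simp_all add: G3_eq mat3_mult mat1_3 mat3_eq)

lemma G2_eq: "G2 = mat3 2 (1-w) (-1) (-2-w) (-1) 0 (-1) 0 0"
  unfolding G2_def G1inv G3inv
  by (simp add: G1_eq G3_eq mat3_mult mat3_eq) (use w2 in algebra)

lemma G2inv: "matrix_inv G2 = mat3 0 0 (-1) 0 (-1) (2+w) (-1) (w-1) 2"
  by (rule matrix_inv_eq) (simp_all add: G2_eq mat3_mult mat1_3 mat3_eq, (use w2 in algebra)+)

definition pfix :: cvec where "pfix = vector [-2, 2+w, 2]"

lemma G2_p2: "G2 *v pfix = pfix"
  unfolding pfix_def G2_eq mat3_vec vec3_eq by (use w2 in algebra)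

lemma mat3_expand: "(A::cmat) = mat3 (A$1$1) (A$1$2) (A$1$3) (A$2$1) (A$2$2) (A$2$3) (A$3$1) (A$3$2) (A$3$3)"
  unfolding mat3_def by (simp add: vec_eq_iff forall_3)

definition Pm :: "nat \<Rightarrow> cmat" where
  "Pm k = mat3 1 (of_nat k) (of_nat k * (-1-w) - of_nat k * (of_nat k - 1) / 2) 0 1 (- of_nat k) 0 0 1"
definition Nm :: "nat \<Rightarrow> cmat" where
  "Nm k = mat3 1 (- of_nat k) (of_nat k * (1+w) - of_nat k * (of_nat k + 1) / 2) 0 1 (of_nat k) 0 0 1"

lemma mpow_G1: "mpow G1 k = Pm k"
proof (induction k)
  case 0 then show ?case by (simp add: Pm_def mat1_3)
next
  case (Suc k) then show ?case
    by (simp add: Pm_def G1_eq mat3_mult mat3_eq field_simps)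
qed

lemma mpow_G1_inv: "matrix_inv (mpow G1 k) = Nm k"
  unfolding mpow_G1
  by (rule matrix_inv_eq) (simp_all add: Pm_def Nm_def mat3_mult mat1_3 mat3_eq field_simps)


lemma Qv_eq: "Qv = vector [1, 0, 0]" by (simp add: Qv_def)

lemma gbase_Q: "gbase 1 *v Qv = vector [2, -2-w, -1]" "gbase 2 *v Qv = vector [0, 0, -1]" "gbase 3 *v Qv = vector [1, -1, w]" "gbase 4 *v Qv = vector [1, 1, -1-w]"
  by (simp_all only: gbase_def G2inv G3inv, simp_all add: G2_eq G3_eq Qv_eq mat3_vec vec3_eq)

lemma Pm_Q: "Pm k *v Qv = Qv" and Nm_Q: "Nm k *v Qv = Qv"
  by (simp_all add: Pm_def Nm_def Qv_eq mat3_vec)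

lemma herm_p2: "herm pfix (vector [x,y,z]) = -2 * cnj z + (2+w) * cnj y + 2 * cnj x"
  unfolding pfix_def herm3 by simp

lemma cmod_Aw: "(cmod (complex_of_real A + complex_of_real B * w))^2 = A^2 - A*B + 2*B^2"
proof -
  have "(cmod (complex_of_real A + complex_of_real B * w))^2 = (A - B/2)^2 + (B * r7/2)^2"
    by (simp add: cmod_power2 w_Re w_Im)
  also have "\<dots> = A^2 - A*B + 2*B^2"
    using r7sq by (simp add: power2_eq_square algebra_simps)
  finally show ?thesis .
qed

lemma herm_P1: "herm pfix (Pm k *v vector [2, -2-w, -1]) = complex_of_real (2 - real k + real k^2) + complex_of_real (real k) * w"
  by (simp add: Pm_def mat3_vec herm_p2 cnj_w) (algebra | use w2 in algebra)

lemma herm_P2: "herm pfix (Pm k *v vector [0, 0, -1]) = complex_of_real (2 + real k + real k^2) + complex_of_real (- real k) * w"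
  by (simp add: Pm_def mat3_vec herm_p2 cnj_w) (algebra | use w2 in algebra)

lemma herm_P3: "herm pfix (Pm k *v vector [1, -1, w]) = complex_of_real (2 + real k + real k^2) + complex_of_real (1 + real k + real k^2) * w"
  by (simp add: Pm_def mat3_vec herm_p2 cnj_w) (algebra | use w2 in algebra)

lemma herm_P4: "herm pfix (Pm k *v vector [1, 1, -1-w]) = complex_of_real (4) + complex_of_real (-1 - 2*real k - real k^2) * w"
  by (simp add: Pm_def mat3_vec herm_p2 cnj_w) (algebra | use w2 in algebra)

lemma herm_N1: "herm pfix (Nm k *v vector [2, -2-w, -1]) = complex_of_real (2 + real k + real k^2) + complex_of_real (- real k) * w"
  by (simp add: Nm_def mat3_vec herm_p2 cnj_w) (algebra | use w2 in algebra)

lemma herm_N2: "herm pfix (Nm k *v vector [0, 0, -1]) = complex_of_real (2 - real k + real k^2) + complex_of_real (real k) * w"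
  by (simp add: Nm_def mat3_vec herm_p2 cnj_w) (algebra | use w2 in algebra)

lemma herm_N3: "herm pfix (Nm k *v vector [1, -1, w]) = complex_of_real (2 - real k + real k^2) + complex_of_real (1 - real k + real k^2) * w"
  by (simp add: Nm_def mat3_vec herm_p2 cnj_w) (algebra | use w2 in algebra)

lemma herm_N4: "herm pfix (Nm k *v vector [1, 1, -1-w]) = complex_of_real (4) + complex_of_real (-1 + 2*real k - real k^2) * w"
  by (simp add: Nm_def mat3_vec herm_p2 cnj_w) (algebra | use w2 in algebra)


lemma Pm_inv: "matrix_inv (Pm k) = Nm k" using mpow_G1_inv[of k] by (simp add: mpow_G1)

lemma Pm0: "Pm 0 = mat 1" by (simp add: Pm_def mat1_3)

lemma gammaQ: "gamma n *v Qv = (if (n-1) div 4 = 0 then Pm 0 else if odd ((n-1) div 4) then Pm (((n-1) div 4 + 1) div 2) else Nm ((n-1) div 4 div 2)) *v (gbase ((n-1) mod 4 + 1) *v Qv)"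
  unfolding gamma_def Let_def mpow_G1_inv mpow_G1
  by (simp add: matrix_vector_mul_assoc[symmetric] Pm_Q Nm_Q Pm0 Pm_inv matrix_vector_mul_lid del: mpow.simps)

lemma herm_p2_Q: "herm pfix Qv = 2" by (simp add: pfix_def Qv_eq herm3)

lemma f_p2: "n \<noteq> 0 \<Longrightarrow> f n pfix = 4 - (cmod (herm pfix (gamma n *v Qv)))^2"
  by (simp add: f_def herm_p2_Q)

lemma FP1: "4 - (cmod (herm pfix (Pm k *v (gbase 1 *v Qv))))^2 = - (real k * (real k - 1) * ((real k)^2 - 2*real k + 6))"
  unfolding gbase_Q herm_P1 cmod_Aw by (simp add: power2_eq_square power3_eq_cube power4_eq_xxxx algebra_simps)

lemma FP2: "4 - (cmod (herm pfix (Pm k *v (gbase 2 *v Qv))))^2 = - (real k * ((real k)^3 + 3*(real k)^2 + 8*real k + 6))"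
  unfolding gbase_Q herm_P2 cmod_Aw by (simp add: power2_eq_square power3_eq_cube power4_eq_xxxx algebra_simps)

lemma FP3: "4 - (cmod (herm pfix (Pm k *v (gbase 3 *v Qv))))^2 = - (real k * (2*(real k)^3 + 4*(real k)^2 + 7*real k + 5))"
  unfolding gbase_Q herm_P3 cmod_Aw by (simp add: power2_eq_square power3_eq_cube power4_eq_xxxx algebra_simps)

lemma FP4: "4 - (cmod (herm pfix (Pm k *v (gbase 4 *v Qv))))^2 = - (2*(real k)^4 + 8*(real k)^3 + 16*(real k)^2 + 16*real k + 18)"
  unfolding gbase_Q herm_P4 cmod_Aw by (simp add: power2_eq_square power3_eq_cube power4_eq_xxxx algebra_simps)

lemma FN1: "4 - (cmod (herm pfix (Nm k *v (gbase 1 *v Qv))))^2 = - (real k * ((real k)^3 + 3*(real k)^2 + 8*real k + 6))"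
  unfolding gbase_Q herm_N1 cmod_Aw by (simp add: power2_eq_square power3_eq_cube power4_eq_xxxx algebra_simps)

lemma FN2: "4 - (cmod (herm pfix (Nm k *v (gbase 2 *v Qv))))^2 = - (real k * (real k - 1) * ((real k)^2 - 2*real k + 6))"
  unfolding gbase_Q herm_N2 cmod_Aw by (simp add: power2_eq_square power3_eq_cube power4_eq_xxxx algebra_simps)

lemma FN3: "4 - (cmod (herm pfix (Nm k *v (gbase 3 *v Qv))))^2 = - (real k * (real k - 1) * (2*(real k)^2 - 2*real k + 5))"
  unfolding gbase_Q herm_N3 cmod_Aw by (simp add: power2_eq_square power3_eq_cube power4_eq_xxxx algebra_simps)

lemma FN4: "4 - (cmod (herm pfix (Nm k *v (gbase 4 *v Qv))))^2 = - (2*(real k)^4 - 8*(real k)^3 + 16*(real k)^2 - 16*real k + 18)"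
  unfolding gbase_Q herm_N4 cmod_Aw by (simp add: power2_eq_square power3_eq_cube power4_eq_xxxx algebra_simps)


lemma pos1: "(x::real) \<ge> 2 \<Longrightarrow> 0 < x * (x - 1) * (x^2 - 2*x + 6)"
proof -
  assume x: "x \<ge> 2"
  have "x^2 - 2*x + 6 = (x-1)^2 + 5" by (simp add: power2_eq_square algebra_simps)
  then have "0 < x^2 - 2*x + 6" using zero_le_power2[of "x-1"] by linarith
  moreover have "0 < x * (x - 1)" using x by simp
  ultimately show ?thesis by simp
qed
lemma pos2: "(x::real) \<ge> 1 \<Longrightarrow> 0 < x * (x^3 + 3*x^2 + 8*x + 6)"
proof -
  assume x: "x \<ge> 1"
  have "0 \<le> x^3" "0 \<le> x^2" using x by simp_all
  then have "0 < x^3 + 3*x^2 + 8*x + 6" using x by linarith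
  then show ?thesis using x by simp
qed
lemma pos3: "(x::real) \<ge> 1 \<Longrightarrow> 0 < x * (2*x^3 + 4*x^2 + 7*x + 5)"
proof -
  assume x: "x \<ge> 1"
  have "0 \<le> x^3" "0 \<le> x^2" using x by simp_all
  then have "0 < 2*x^3 + 4*x^2 + 7*x + 5" using x by linarith
  then show ?thesis using x by simp
qed
lemma pos4: "(x::real) \<ge> 0 \<Longrightarrow> 0 < 2*x^4 + 8*x^3 + 16*x^2 + 16*x + 18"
proof -
  assume x: "x \<ge> 0"
  have "0 \<le> x^4" "0 \<le> x^3" "0 \<le> x^2" using x by simp_all
  then show ?thesis using x by linarith
qed
lemma pos5: "(x::real) \<ge> 2 \<Longrightarrow> 0 < x * (x - 1) * (2*x^2 - 2*x + 5)"
proof -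
  assume x: "x \<ge> 2"
  have "2*x^2 - 2*x + 5 = 2*(x-1)^2 + 2*x + 3" by (simp add: power2_eq_square algebra_simps)
  then have "0 < 2*x^2 - 2*x + 5" using zero_le_power2[of "x-1"] x by linarith
  moreover have "0 < x * (x - 1)" using x by simp
  ultimately show ?thesis by simp
qed
lemma pos6: "0 < 2*(x::real)^4 - 8*x^3 + 16*x^2 - 16*x + 18"
proof -
  have "2*x^4 - 8*x^3 + 16*x^2 - 16*x + 18 = 2*((x^2-2*x)^2 + 4*(x-1)^2 + 5)"
    by (simp add: power2_eq_square power3_eq_cube power4_eq_xxxx algebra_simps)
  moreover have "0 < 2*((x^2-2*x)^2 + 4*(x-1)^2 + 5)"
    by (intro mult_pos_pos add_nonneg_pos add_nonneg_nonneg) simp_all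
  ultimately show ?thesis by simp
qed

lemma f0_p2: "f 0 pfix = -4"
proof -
  have "cnj (2+w) * (2+w) = 4" by (simp add: cnj_w) (use w2 in algebra)
  then show ?thesis by (simp add: f_def pfix_def herm3 mult.commute)
qed

lemma fp2_main:
  "f n pfix = (if n \<in> {1,2,3,5,10,11} then 0 else f n pfix) \<and> (n \<notin> {1,2,3,5,10,11} \<longrightarrow> f n pfix < 0)"
proof (cases "n = 0")
  case True then show ?thesis by (simp add: f0_p2)
next
  case False
  define m where "m = (n-1) div 4"
  define r where "r = (n-1) mod 4"
  have n: "n = 4*m + r + 1" using False unfolding m_def r_def by simp
  have r4: "r < 4" unfolding r_def by simp
  have key: "f n pfix = 4 - (cmod (herm pfix ((if m = 0 then Pm 0 else if odd m then Pm ((m+1) div 2) else Nm (m div 2)) *v (gbase (r+1) *v Qv))))^2"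
    using False by (simp add: f_p2 gammaQ m_def r_def)
  have rc: "r = 0 \<or> r = 1 \<or> r = 2 \<or> r = 3" using r4 by arith
  consider (z) "m = 0" | (o) "odd m" | (e) "m \<noteq> 0" "even m" by blast
  then show ?thesis
  proof cases
    case z
    have key': "f n pfix = 4 - (cmod (herm pfix (Pm 0 *v (gbase (r+1) *v Qv))))^2"
      using key z by auto
    { assume "r = 0" then have g: "gbase (r+1) = gbase 1" by (simp add: eval_nat_numeral)
      have "f n pfix = 0" using key'[unfolded g] FP1[of 0] by simp
      then have ?thesis using n z \<open>r = 0\<close> by simp }
    moreover
    { assume "r = 1" then have g: "gbase (r+1) = gbase 2" by (simp add: eval_nat_numeral)
      have "f n pfix = 0" using key'[unfolded g] FP2[of 0] by simp
      then have ?thesis using n z \<open>r = 1\<close> by simp }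
    moreover
    { assume "r = 2" then have g: "gbase (r+1) = gbase 3" by (simp add: eval_nat_numeral)
      have "f n pfix = 0" using key'[unfolded g] FP3[of 0] by simp
      then have ?thesis using n z \<open>r = 2\<close> by simp }
    moreover
    { assume "r = 3" then have g: "gbase (r+1) = gbase 4" by (simp add: eval_nat_numeral)
      have "f n pfix = -18" using key'[unfolded g] FP4[of 0] by simp
      then have ?thesis using n z \<open>r = 3\<close> by simp }
    ultimately show ?thesis using rc by blast
  next
    case o
    define k where "k = (m+1) div 2"
    have k1: "k \<ge> 1" and mk: "m = 2*k - 1" using o unfolding k_def by (auto elim: oddE)
    have key': "f n pfix = 4 - (cmod (herm pfix (Pm k *v (gbase (r+1) *v Qv))))^2"
      using key o k_def by auto
    have rk: "real k \<ge> 1" using k1 by simp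
    show ?thesis
    proof -
      { assume "r = 0"
        then have g: "gbase (r+1) = gbase 1" by (simp add: eval_nat_numeral)
        have fv: "f n pfix = - (real k * (real k - 1) * ((real k)^2 - 2*real k + 6))" using key'[unfolded g] FP1 by simp
        have ?thesis
        proof (cases "k = 1")
          case True then show ?thesis using fv n mk \<open>r=0\<close> by simp
        next
          case False then have k2: "real k \<ge> 2" using k1 by simp
          have nJ: "n \<noteq> 1 \<and> n \<noteq> 2 \<and> n \<noteq> 3 \<and> n \<noteq> 5 \<and> n \<noteq> 10 \<and> n \<noteq> 11" using n mk k1 False \<open>r=0\<close> by presburger
          from pos1[OF k2] fv nJ show ?thesis by simp
        qed }
      moreover
      { assume "r = 1"
        then have g: "gbase (r+1) = gbase 2" by (simp add: eval_nat_numeral)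
        have fv: "f n pfix = - (real k * ((real k)^3 + 3*(real k)^2 + 8*real k + 6))" using key'[unfolded g] FP2 by simp
        have nJ: "n \<noteq> 1 \<and> n \<noteq> 2 \<and> n \<noteq> 3 \<and> n \<noteq> 5 \<and> n \<noteq> 10 \<and> n \<noteq> 11" using n mk k1 \<open>r=1\<close> by presburger
        have ?thesis using pos2[OF rk] fv nJ by simp }
      moreover
      { assume "r = 2"
        then have g: "gbase (r+1) = gbase 3" by (simp add: eval_nat_numeral)
        have fv: "f n pfix = - (real k * (2*(real k)^3 + 4*(real k)^2 + 7*real k + 5))" using key'[unfolded g] FP3 by simp
        have nJ: "n \<noteq> 1 \<and> n \<noteq> 2 \<and> n \<noteq> 3 \<and> n \<noteq> 5 \<and> n \<noteq> 10 \<and> n \<noteq> 11" using n mk k1 \<open>r=2\<close> by presburger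
        have ?thesis using pos3[OF rk] fv nJ by simp }
      moreover
      { assume "r = 3"
        then have g: "gbase (r+1) = gbase 4" by (simp add: eval_nat_numeral)
        have fv: "f n pfix = - (2*(real k)^4 + 8*(real k)^3 + 16*(real k)^2 + 16*real k + 18)" using key'[unfolded g] FP4 by simp
        have nJ: "n \<noteq> 1 \<and> n \<noteq> 2 \<and> n \<noteq> 3 \<and> n \<noteq> 5 \<and> n \<noteq> 10 \<and> n \<noteq> 11" using n mk k1 \<open>r=3\<close> by presburger
        have ?thesis using pos4[of "real k"] fv nJ by simp }
      ultimately show ?thesis using rc by blast
    qed
  next
    case e
    define k where "k = m div 2"
    have k1: "k \<ge> 1" and mk: "m = 2*k" using e unfolding k_def by (auto elim: evenE)
    have key': "f n pfix = 4 - (cmod (herm pfix (Nm k *v (gbase (r+1) *v Qv))))^2"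
      using key e k_def by auto
    have rk: "real k \<ge> 1" using k1 by simp
    show ?thesis
    proof -
      { assume "r = 0"
        then have g: "gbase (r+1) = gbase 1" by (simp add: eval_nat_numeral)
        have fv: "f n pfix = - (real k * ((real k)^3 + 3*(real k)^2 + 8*real k + 6))" using key'[unfolded g] FN1 by simp
        have nJ: "n \<noteq> 1 \<and> n \<noteq> 2 \<and> n \<noteq> 3 \<and> n \<noteq> 5 \<and> n \<noteq> 10 \<and> n \<noteq> 11" using n mk k1 \<open>r=0\<close> by presburger
        have ?thesis using pos2[OF rk] fv nJ by simp }
      moreover
      { assume "r = 1"
        then have g: "gbase (r+1) = gbase 2" by (simp add: eval_nat_numeral)
        have fv: "f n pfix = - (real k * (real k - 1) * ((real k)^2 - 2*real k + 6))" using key'[unfolded g] FN2 by simp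
        have ?thesis
        proof (cases "k = 1")
          case True then show ?thesis using fv n mk \<open>r=1\<close> by simp
        next
          case False then have k2: "real k \<ge> 2" using k1 by simp
          have nJ: "n \<noteq> 1 \<and> n \<noteq> 2 \<and> n \<noteq> 3 \<and> n \<noteq> 5 \<and> n \<noteq> 10 \<and> n \<noteq> 11" using n mk k1 False \<open>r=1\<close> by presburger
          from pos1[OF k2] fv nJ show ?thesis by simp
        qed }
      moreover
      { assume "r = 2"
        then have g: "gbase (r+1) = gbase 3" by (simp add: eval_nat_numeral)
        have fv: "f n pfix = - (real k * (real k - 1) * (2*(real k)^2 - 2*real k + 5))" using key'[unfolded g] FN3 by simp
        have ?thesis
        proof (cases "k = 1")
          case True then show ?thesis using fv n mk \<open>r=2\<close> by simp
        next
          case False then have k2: "real k \<ge> 2" using k1 by simp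
          have nJ: "n \<noteq> 1 \<and> n \<noteq> 2 \<and> n \<noteq> 3 \<and> n \<noteq> 5 \<and> n \<noteq> 10 \<and> n \<noteq> 11" using n mk k1 False \<open>r=2\<close> by presburger
          from pos5[OF k2] fv nJ show ?thesis by simp
        qed }
      moreover
      { assume "r = 3"
        then have g: "gbase (r+1) = gbase 4" by (simp add: eval_nat_numeral)
        have fv: "f n pfix = - (2*(real k)^4 - 8*(real k)^3 + 16*(real k)^2 - 16*real k + 18)" using key'[unfolded g] FN4 by simp
        have nJ: "n \<noteq> 1 \<and> n \<noteq> 2 \<and> n \<noteq> 3 \<and> n \<noteq> 5 \<and> n \<noteq> 10 \<and> n \<noteq> 11" using n mk k1 \<open>r=3\<close> by presburger
        have ?thesis using pos6[of "real k"] fv nJ by simp }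
      ultimately show ?thesis using rc by blast
    qed
  qed
qed


lemma gQ1: "gamma 1 *v Qv = vector [2, -2-w, -1]"
  using gammaQ[of 1] by (simp add: Pm0 gbase_def G2_eq Qv_eq mat3_vec)
lemma gQ2: "gamma 2 *v Qv = vector [0, 0, -1]"
  using gammaQ[of 2] by (simp add: Pm0 gbase_def G2inv Qv_eq mat3_vec)
lemma gQ3: "gamma 3 *v Qv = vector [1, -1, w]"
  using gammaQ[of 3] by (simp add: Pm0 gbase_def G3_eq Qv_eq mat3_vec)
lemma gQ10: "gamma 10 *v Qv = vector [-w, -1, -1]"
proof -
  have "gamma 10 *v Qv = Nm 1 *v (matrix_inv G2 *v Qv)"
    using gammaQ[of 10] by (simp add: gbase_def)
  then show ?thesis by (simp add: G2inv Qv_eq Nm_def mat3_vec vec3_eq)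
qed

lemma f_V: fixes a b c :: complex
  shows "f 0 (vector [a,b,c]) = Re (a * cnj c + b * cnj b + c * cnj a)"
    "f 1 (vector [a,b,c]) = (cmod c)^2 - (cmod (-a + (w - 1) * b + 2 * c))^2"
    "f 2 (vector [a,b,c]) = (cmod c)^2 - (cmod a)^2"
    "f 3 (vector [a,b,c]) = (cmod c)^2 - (cmod (a * (-1-w) - b + c))^2"
    "f 10 (vector [a,b,c]) = (cmod c)^2 - (cmod (-a - b + c * (1 + w)))^2"
  by (simp_all only: f_def gQ1 gQ2 gQ3 gQ10) (simp_all add: herm3 Qv_eq cnj_w algebra_simps)


lemma r7sq': "r7 * (r7 * x) = 7 * x" using r7sq by (simp add: mult.assoc[symmetric])
lemma r7sq2: "r7^2 = 7" using r7sq by (simp add: power2_eq_square)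

lemma combA: fixes t a b c d e g :: real shows "- t = a + b + c + d + e + g \<Longrightarrow> 0 \<le> a \<Longrightarrow> 0 \<le> b \<Longrightarrow> 0 \<le> c \<Longrightarrow> 0 \<le> d \<Longrightarrow> e = 0 \<Longrightarrow> g = 0 \<Longrightarrow> t \<le> 0" by linarith

lemma sosA0: fixes y0 y1 y2 y3 y4 y5 y6 y7 y8 y9 y10 y11 y12 y13 :: real
  shows "0 \<le> ((33/125::real)*(y0)*(y0) + -(1/10::real)*(y0)*(y1) + -(46/125::real)*(y0)*(y2) + -(3/25::real)*(y0)*(y3) + -(63/100::real)*(y0)*(y4) + (16251/14000::real)*(y0)*(y5) + -(11/500::real)*(y0)*(y6) + (51/250::real)*(y0)*(y7) + -(201/250::real)*(y0)*(y8) + -(83/500::real)*(y0)*(y9) + (213/1000::real)*(y0)*(y10) + -(1/10::real)*(y0)*(y11) + -(42/125::real)*(y0)*(y12) + -(7/250::real)*(y0)*(y13) + (441/1000::real)*(y1)*(y1) + (13/250::real)*(y1)*(y2) + -(1121/3500::real)*(y1)*(y3) + (12/5::real)*(y1)*(y4) + (89/500::real)*(y1)*(y5) + (4827/14000::real)*(y1)*(y6) + -(28/125::real)*(y1)*(y7) + (183/500::real)*(y1)*(y8) + -(106/125::real)*(y1)*(y9) + -(289/500::real)*(y1)*(y10) + (99/500::real)*(y1)*(y11) + (89/250::real)*(y1)*(y12) + -(28/125::real)*(y1)*(y13) + (26/125::real)*(y2)*(y2) + (1/250::real)*(y2)*(y3) + (37/100::real)*(y2)*(y4) + -(103/125::real)*(y2)*(y5)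 + -(1/100::real)*(y2)*(y6) + (27/500::real)*(y2)*(y7) + (167/250::real)*(y2)*(y8) + (49/250::real)*(y2)*(y9) + -(63/500::real)*(y2)*(y10) + (23/250::real)*(y2)*(y11) + (89/400::real)*(y2)*(y12) + -(9/500::real)*(y2)*(y13) + (79/200::real)*(y3)*(y3) + -(69/100::real)*(y3)*(y4) + -(131/500::real)*(y3)*(y5) + -(32/125::real)*(y3)*(y6) + (43/100::real)*(y3)*(y7) + (28/125::real)*(y3)*(y8) + (361/250::real)*(y3)*(y9) + -(4/25::real)*(y3)*(y10) + (4/25::real)*(y3)*(y11) + (129/250::real)*(y3)*(y12) + (4581/14000::real)*(y3)*(y13) + (1409/250::real)*(y4)*(y4) + -(917/500::real)*(y4)*(y5) + (3347/7000::real)*(y4)*(y6) + -(777/200::real)*(y4)*(y7) + (1301/500::real)*(y4)*(y8) + -(623/250::real)*(y4)*(y9) + -(539/500::real)*(y4)*(y10) + (1273/1000::real)*(y4)*(y11) + (329/250::real)*(y4)*(y12) + -(373/500::real)*(y4)*(y13) + (731/250::real)*(y5)*(y5) + -(131/500::real)*(y5)*(y6) + (37/20::real)*(y5)*(y7) + -(1993/500::real)*(y5)*(y8) + (17/125::real)*(y5)*(y9) + -(158/125::real)*(y5)*(y10) + (63/500::real)*(y5)*(y11) + -(1/20::real)*(y5)*(y12) + -(3/50::real)*(y5)*(y13) + (371/1000::real)*(y6)*(y6) + -(193/500::real)*(y6)*(y7) + (51/500::real)*(y6)*(y8) + -(187/500::real)*(y6)*(y9) + (127/500::real)*(y6)*(y10)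 + -(68/125::real)*(y6)*(y11) + (9/100::real)*(y6)*(y12) + -(13/100::real)*(y6)*(y13) + (868/125::real)*(y7)*(y7) + -(383/500::real)*(y7)*(y8) + -(6363/1000::real)*(y7)*(y9) + -(49/10::real)*(y7)*(y10) + (1/20::real)*(y7)*(y11) + (2599/1000::real)*(y7)*(y12) + (371/500::real)*(y7)*(y13) + (413/125::real)*(y8)*(y8) + (343/1000::real)*(y8)*(y9) + -(207/500::real)*(y8)*(y10) + -(63/500::real)*(y8)*(y11) + -(1449/1000::real)*(y8)*(y12) + (12/25::real)*(y8)*(y13) + (651/125::real)*(y9)*(y9) + (264/125::real)*(y9)*(y10) + -(17/100::real)*(y9)*(y11) + -(42/25::real)*(y9)*(y12) + (529/1000::real)*(y9)*(y13) + (1281/500::real)*(y10)*(y10) + -(253/500::real)*(y10)*(y11) + -(477/250::real)*(y10)*(y12) + -(223/500::real)*(y10)*(y13) + (329/500::real)*(y11)*(y11) + (86/125::real)*(y11)*(y12) + -(67/250::real)*(y11)*(y13) + (993/500::real)*(y12)*(y12) + -(6/25::real)*(y12)*(y13) + (253/1000::real)*(y13)*(y13))"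
proof -
  have "((33/125::real)*(y0)*(y0) + -(1/10::real)*(y0)*(y1) + -(46/125::real)*(y0)*(y2) + -(3/25::real)*(y0)*(y3) + -(63/100::real)*(y0)*(y4) + (16251/14000::real)*(y0)*(y5) + -(11/500::real)*(y0)*(y6) + (51/250::real)*(y0)*(y7) + -(201/250::real)*(y0)*(y8) + -(83/500::real)*(y0)*(y9) + (213/1000::real)*(y0)*(y10) + -(1/10::real)*(y0)*(y11) + -(42/125::real)*(y0)*(y12) + -(7/250::real)*(y0)*(y13) + (441/1000::real)*(y1)*(y1) + (13/250::real)*(y1)*(y2) + -(1121/3500::real)*(y1)*(y3) + (12/5::real)*(y1)*(y4) + (89/500::real)*(y1)*(y5) + (4827/14000::real)*(y1)*(y6) + -(28/125::real)*(y1)*(y7) + (183/500::real)*(y1)*(y8) + -(106/125::real)*(y1)*(y9) + -(289/500::real)*(y1)*(y10) + (99/500::real)*(y1)*(y11) + (89/250::real)*(y1)*(y12) + -(28/125::real)*(y1)*(y13) + (26/125::real)*(y2)*(y2) + (1/250::real)*(y2)*(y3) + (37/100::real)*(y2)*(y4) + -(103/125::real)*(y2)*(y5) + -(1/100::real)*(y2)*(y6) + (27/500::real)*(y2)*(y7) + (167/250::real)*(y2)*(y8) + (49/250::real)*(y2)*(y9) + -(63/500::real)*(y2)*(y10) + (23/250::real)*(y2)*(y11) + (89/400::real)*(y2)*(y12) + -(9/500::real)*(y2)*(y13) + (79/200::real)*(y3)*(y3) + -(69/100::real)*(y3)*(y4) + -(131/500::real)*(y3)*(y5) + -(32/125::real)*(y3)*(y6)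 + (43/100::real)*(y3)*(y7) + (28/125::real)*(y3)*(y8) + (361/250::real)*(y3)*(y9) + -(4/25::real)*(y3)*(y10) + (4/25::real)*(y3)*(y11) + (129/250::real)*(y3)*(y12) + (4581/14000::real)*(y3)*(y13) + (1409/250::real)*(y4)*(y4) + -(917/500::real)*(y4)*(y5) + (3347/7000::real)*(y4)*(y6) + -(777/200::real)*(y4)*(y7) + (1301/500::real)*(y4)*(y8) + -(623/250::real)*(y4)*(y9) + -(539/500::real)*(y4)*(y10) + (1273/1000::real)*(y4)*(y11) + (329/250::real)*(y4)*(y12) + -(373/500::real)*(y4)*(y13) + (731/250::real)*(y5)*(y5) + -(131/500::real)*(y5)*(y6) + (37/20::real)*(y5)*(y7) + -(1993/500::real)*(y5)*(y8) + (17/125::real)*(y5)*(y9) + -(158/125::real)*(y5)*(y10) + (63/500::real)*(y5)*(y11) + -(1/20::real)*(y5)*(y12) + -(3/50::real)*(y5)*(y13) + (371/1000::real)*(y6)*(y6) + -(193/500::real)*(y6)*(y7) + (51/500::real)*(y6)*(y8) + -(187/500::real)*(y6)*(y9) + (127/500::real)*(y6)*(y10) + -(68/125::real)*(y6)*(y11) + (9/100::real)*(y6)*(y12) + -(13/100::real)*(y6)*(y13) + (868/125::real)*(y7)*(y7) + -(383/500::real)*(y7)*(y8) + -(6363/1000::real)*(y7)*(y9) + -(49/10::real)*(y7)*(y10) + (1/20::real)*(y7)*(y11) + (2599/1000::real)*(y7)*(y12) + (371/500::real)*(y7)*(y13) + (413/125::real)*(y8)*(y8) + (343/1000::real)*(y8)*(y9)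 + -(207/500::real)*(y8)*(y10) + -(63/500::real)*(y8)*(y11) + -(1449/1000::real)*(y8)*(y12) + (12/25::real)*(y8)*(y13) + (651/125::real)*(y9)*(y9) + (264/125::real)*(y9)*(y10) + -(17/100::real)*(y9)*(y11) + -(42/25::real)*(y9)*(y12) + (529/1000::real)*(y9)*(y13) + (1281/500::real)*(y10)*(y10) + -(253/500::real)*(y10)*(y11) + -(477/250::real)*(y10)*(y12) + -(223/500::real)*(y10)*(y13) + (329/500::real)*(y11)*(y11) + (86/125::real)*(y11)*(y12) + -(67/250::real)*(y11)*(y13) + (993/500::real)*(y12)*(y12) + -(6/25::real)*(y12)*(y13) + (253/1000::real)*(y13)*(y13)) = ((1063/4096::real)*((1::real)*y0 + -(789/4096::real)*y1 + -(2903/4096::real)*y2 + -(947/4096::real)*y3 + -(2485/2048::real)*y4 + (9157/4096::real)*y5 + -(87/2048::real)*y6 + (1609/4096::real)*y7 + -(6343/4096::real)*y8 + -(655/2048::real)*y9 + (105/256::real)*y10 + -(789/4096::real)*y11 + -(2651/4096::real)*y12 + -(221/4096::real)*y13)^2 + (437/1024::real)*((1::real)*y1 + -(91/4096::real)*y2 + -(1647/4096::real)*y3 + (5465/2048::real)*y4 + (963/2048::real)*y5 + (1633/4096::real)*y6 + -(443/2048::real)*y7 + (1013/4096::real)*y8 + -(4221/4096::real)*y9 + -(161/256::real)*y10 + (857/4096::real)*y11 + (1397/4096::real)*y12 + -(275/1024::real)*y13)^2 + (149/2048::real)*((1::real)*y2 + -(2487/4096::real)*y3 + -(367/2048::real)*y4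 + (213/4096::real)*y5 + -(507/4096::real)*y6 + (2729/2048::real)*y7 + (2885/4096::real)*y8 + (1653/4096::real)*y9 + (367/4096::real)*y10 + (11/64::real)*y11 + -(129/2048::real)*y12 + -(301/1024::real)*y13)^2 + (575/2048::real)*((1::real)*y3 + (473/4096::real)*y4 + (1257/4096::real)*y5 + -(985/4096::real)*y6 + (475/512::real)*y7 + (1353/4096::real)*y8 + (1983/1024::real)*y9 + -(2325/4096::real)*y10 + (817/2048::real)*y11 + (4011/4096::real)*y12 + (1477/4096::real)*y13)^2 + (141/64::real)*((1::real)*y4 + -(1409/4096::real)*y5 + -(207/2048::real)*y6 + -(2947/4096::real)*y7 + (985/4096::real)*y8 + -(107/1024::real)*y9 + (303/2048::real)*y10 + (607/4096::real)*y11 + (61/4096::real)*y12 + -(185/4096::real)*y13)^2 + (635/512::real)*((1::real)*y5 + -(399/2048::real)*y6 + (91/1024::real)*y7 + -(1639/2048::real)*y8 + (703/4096::real)*y9 + -(1925/4096::real)*y10 + (347/2048::real)*y11 + (691/4096::real)*y12 + -(29/4096::real)*y13)^2 + (865/4096::real)*((1::real)*y6 + -(4181/4096::real)*y7 + -(579/1024::real)*y8 + (2669/4096::real)*y9 + (2333/4096::real)*y10 + -(4019/4096::real)*y11 + (1735/4096::real)*y12 + -(193/4096::real)*y13)^2 + (21045/4096::real)*((1::real)*y7 + -(7/4096::real)*y8 + -(3055/4096::real)*y9 + -(399/1024::real)*y10 + -(41/4096::real)*y11 + (31/128::real)*y12 + (41/1024::real)*y13)^2 + (6531/4096::real)*((1::real)*y8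 + (637/4096::real)*y9 + -(1049/4096::real)*y10 + -(607/4096::real)*y11 + -(2301/4096::real)*y12 + (77/512::real)*y13)^2 + (627/1024::real)*((1::real)*y9 + -(849/2048::real)*y10 + -(667/4096::real)*y11 + -(995/2048::real)*y12 + (455/4096::real)*y13)^2 + (1789/2048::real)*((1::real)*y10 + -(79/1024::real)*y11 + -(271/512::real)*y12 + -(207/4096::real)*y13)^2 + (479/2048::real)*((1::real)*y11 + (273/4096::real)*y12 + -(427/1024::real)*y13)^2 + (583/2048::real)*((1::real)*y12 + -(295/1024::real)*y13)^2 + (13/256::real)*((1::real)*y13)^2 + (2232123/587202560::real)*y0^2 + (180729187623/60129542144000::real)*y1^2 + (28569106547/8589934592000::real)*y2^2 + (29095356307/8589934592000::real)*y3^2 + (33702856179/15032385536000::real)*y4^2 + (192574041953/60129542144000::real)*y5^2 + (20312399753/7516192768000::real)*y6^2 + (15386746113/8589934592000::real)*y7^2 + (7370943413/4294967296000::real)*y8^2 + (6765313897/8589934592000::real)*y9^2 + (8822952543/4294967296000::real)*y10^2 + (9995577841/4294967296000::real)*y11^2 + (5838814173/1717986918400::real)*y12^2 + (150806319581/60129542144000::real)*y13^2 + (769/83886080::real)*(y0 - y1)^2 + (139843/2097152000::real)*(y0 - y2)^2 + (701/419430400::real)*(y0 + y3)^2 + (21413/209715200::real)*(y0 - y4)^2 + (3049663/14680064000::real)*(y0 + y5)^2 + (25789/1048576000::real)*(y0 + y6)^2 + (113629/2097152000::real)*(y0 + y7)^2 + (228979/2097152000::real)*(y0 - y8)^2 +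 (1317/1048576000::real)*(y0 + y9)^2 + (7293/131072000::real)*(y0 + y10)^2 + (769/83886080::real)*(y0 - y11)^2 + (69911/2097152000::real)*(y0 - y12)^2 + (5247/2097152000::real)*(y0 + y13)^2 + (435312767/8589934592000::real)*(y1 + y2)^2 + (6111961507/60129542144000::real)*(y1 - y3)^2 + (95742133/171798691840::real)*(y1 + y4)^2 + (785402563/8589934592000::real)*(y1 + y5)^2 + (3869886073/30064771072000::real)*(y1 + y6)^2 + (438992929/8589934592000::real)*(y1 - y7)^2 + (357529711/8589934592000::real)*(y1 + y8)^2 + (888421129/4294967296000::real)*(y1 - y9)^2 + (56528193/536870912000::real)*(y1 - y10)^2 + (691614733/8589934592000::real)*(y1 + y11)^2 + (800353251/8589934592000::real)*(y1 + y12)^2 + (768355179/8589934592000::real)*(y1 - y13)^2 + (1403853691/8589934592000::real)*(y2 - y3)^2 + (134679727/858993459200::real)*(y2 + y4)^2 + (1070422279/8589934592000::real)*(y2 - y5)^2 + (24197121/858993459200::real)*(y2 - y6)^2 + (2201070109/8589934592000::real)*(y2 + y7)^2 + (2274138353/8589934592000::real)*(y2 + y8)^2 + (181442383/4294967296000::real)*(y2 + y9)^2 + (21529831/536870912000::real)*(y2 - y10)^2 + (417844107/8589934592000::real)*(y2 + y11)^2 + (37122697/1717986918400::real)*(y2 + y12)^2 + (727440953/8589934592000::real)*(y2 - y13)^2 + (204265599/858993459200::real)*(y3 - y4)^2 + (312547677/8589934592000::real)*(y3 - y5)^2 + (185117819/2147483648000::real)*(y3 - y6)^2 + (270106519/1717986918400::real)*(y3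 - y7)^2 + (913698821/8589934592000::real)*(y3 - y8)^2 + (214109231/2147483648000::real)*(y3 + y9)^2 + (13936589/858993459200::real)*(y3 + y10)^2 + (111824853/1717986918400::real)*(y3 - y11)^2 + (219586139/8589934592000::real)*(y3 - y12)^2 + (3584929613/60129542144000::real)*(y3 + y13)^2 + (217080159/2147483648000::real)*(y4 + y5)^2 + (16353616981/30064771072000::real)*(y4 + y6)^2 + (59042321/858993459200::real)*(y4 - y7)^2 + (827100423/2147483648000::real)*(y4 + y8)^2 + (525265079/1073741824000::real)*(y4 - y9)^2 + (140146919/4294967296000::real)*(y4 - y10)^2 + (1693385779/4294967296000::real)*(y4 + y11)^2 + (887348509/2147483648000::real)*(y4 + y12)^2 + (389667829/2147483648000::real)*(y4 - y13)^2 + (602982401/4294967296000::real)*(y5 - y6)^2 + (12230629/343597383680::real)*(y5 + y7)^2 + (4192973231/8589934592000::real)*(y5 - y8)^2 + (45488859/536870912000::real)*(y5 - y9)^2 + (212338143/1073741824000::real)*(y5 - y10)^2 + (650163329/8589934592000::real)*(y5 - y11)^2 + (4384977/343597383680::real)*(y5 - y12)^2 + (363862127/1717986918400::real)*(y5 - y13)^2 + (1741270753/4294967296000::real)*(y6 - y7)^2 + (341937221/4294967296000::real)*(y6 + y8)^2 + (928255977/4294967296000::real)*(y6 - y9)^2 + (234006171/2147483648000::real)*(y6 + y10)^2 + (380722637/4294967296000::real)*(y6 - y11)^2 + (4557757/429496729600::real)*(y6 + y12)^2 + (9054899/429496729600::real)*(y6 - y13)^2 + (2897680611/8589934592000::real)*(y7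 - y8)^2 + (4188654427/8589934592000::real)*(y7 + y9)^2 + (130922569/343597383680::real)*(y7 + y10)^2 + (40695447/85899345920::real)*(y7 - y11)^2 + (19107087/1073741824000::real)*(y7 - y12)^2 + (1746988309/4294967296000::real)*(y7 - y13)^2 + (3903430903/8589934592000::real)*(y8 + y9)^2 + (95596733/268435456000::real)*(y8 + y10)^2 + (850028551/2147483648000::real)*(y8 + y11)^2 + (1788242029/8589934592000::real)*(y8 - y12)^2 + (193206541/1717986918400::real)*(y8 + y13)^2 + (1450618087/2147483648000::real)*(y9 - y10)^2 + (432978911/1717986918400::real)*(y9 + y11)^2 + (161707703/858993459200::real)*(y9 - y12)^2 + (1795549459/8589934592000::real)*(y9 + y13)^2 + (411680737/4294967296000::real)*(y10 + y11)^2 + (161698317/2147483648000::real)*(y10 - y12)^2 + (1930523359/8589934592000::real)*(y10 + y13)^2 + (1955812977/8589934592000::real)*(y11 - y12)^2 + (710501039/4294967296000::real)*(y11 - y13)^2 + (89423577/429496729600::real)*(y12 - y13)^2)"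
    by algebra
  moreover have "0 \<le> ((1063/4096::real)*((1::real)*y0 + -(789/4096::real)*y1 + -(2903/4096::real)*y2 + -(947/4096::real)*y3 + -(2485/2048::real)*y4 + (9157/4096::real)*y5 + -(87/2048::real)*y6 + (1609/4096::real)*y7 + -(6343/4096::real)*y8 + -(655/2048::real)*y9 + (105/256::real)*y10 + -(789/4096::real)*y11 + -(2651/4096::real)*y12 + -(221/4096::real)*y13)^2 + (437/1024::real)*((1::real)*y1 + -(91/4096::real)*y2 + -(1647/4096::real)*y3 + (5465/2048::real)*y4 + (963/2048::real)*y5 + (1633/4096::real)*y6 + -(443/2048::real)*y7 + (1013/4096::real)*y8 + -(4221/4096::real)*y9 + -(161/256::real)*y10 + (857/4096::real)*y11 + (1397/4096::real)*y12 + -(275/1024::real)*y13)^2 + (149/2048::real)*((1::real)*y2 + -(2487/4096::real)*y3 + -(367/2048::real)*y4 + (213/4096::real)*y5 + -(507/4096::real)*y6 + (2729/2048::real)*y7 + (2885/4096::real)*y8 + (1653/4096::real)*y9 + (367/4096::real)*y10 + (11/64::real)*y11 + -(129/2048::real)*y12 + -(301/1024::real)*y13)^2 + (575/2048::real)*((1::real)*y3 + (473/4096::real)*y4 + (1257/4096::real)*y5 + -(985/4096::real)*y6 + (475/512::real)*y7 + (1353/4096::real)*y8 + (1983/1024::real)*y9 + -(2325/4096::real)*y10 + (817/2048::real)*y11 + (4011/4096::real)*y12 + (1477/4096::real)*y13)^2 + (141/64::real)*((1::real)*y4 + -(1409/4096::real)*y5 + -(207/2048::real)*y6 + -(2947/4096::real)*y7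 + (985/4096::real)*y8 + -(107/1024::real)*y9 + (303/2048::real)*y10 + (607/4096::real)*y11 + (61/4096::real)*y12 + -(185/4096::real)*y13)^2 + (635/512::real)*((1::real)*y5 + -(399/2048::real)*y6 + (91/1024::real)*y7 + -(1639/2048::real)*y8 + (703/4096::real)*y9 + -(1925/4096::real)*y10 + (347/2048::real)*y11 + (691/4096::real)*y12 + -(29/4096::real)*y13)^2 + (865/4096::real)*((1::real)*y6 + -(4181/4096::real)*y7 + -(579/1024::real)*y8 + (2669/4096::real)*y9 + (2333/4096::real)*y10 + -(4019/4096::real)*y11 + (1735/4096::real)*y12 + -(193/4096::real)*y13)^2 + (21045/4096::real)*((1::real)*y7 + -(7/4096::real)*y8 + -(3055/4096::real)*y9 + -(399/1024::real)*y10 + -(41/4096::real)*y11 + (31/128::real)*y12 + (41/1024::real)*y13)^2 + (6531/4096::real)*((1::real)*y8 + (637/4096::real)*y9 + -(1049/4096::real)*y10 + -(607/4096::real)*y11 + -(2301/4096::real)*y12 + (77/512::real)*y13)^2 + (627/1024::real)*((1::real)*y9 + -(849/2048::real)*y10 + -(667/4096::real)*y11 + -(995/2048::real)*y12 + (455/4096::real)*y13)^2 + (1789/2048::real)*((1::real)*y10 + -(79/1024::real)*y11 + -(271/512::real)*y12 + -(207/4096::real)*y13)^2 + (479/2048::real)*((1::real)*y11 + (273/4096::real)*y12 + -(427/1024::real)*y13)^2 + (583/2048::real)*((1::real)*y12 + -(295/1024::real)*y13)^2 + (13/256::real)*((1::real)*y13)^2 + (2232123/587202560::real)*y0^2 +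 (180729187623/60129542144000::real)*y1^2 + (28569106547/8589934592000::real)*y2^2 + (29095356307/8589934592000::real)*y3^2 + (33702856179/15032385536000::real)*y4^2 + (192574041953/60129542144000::real)*y5^2 + (20312399753/7516192768000::real)*y6^2 + (15386746113/8589934592000::real)*y7^2 + (7370943413/4294967296000::real)*y8^2 + (6765313897/8589934592000::real)*y9^2 + (8822952543/4294967296000::real)*y10^2 + (9995577841/4294967296000::real)*y11^2 + (5838814173/1717986918400::real)*y12^2 + (150806319581/60129542144000::real)*y13^2 + (769/83886080::real)*(y0 - y1)^2 + (139843/2097152000::real)*(y0 - y2)^2 + (701/419430400::real)*(y0 + y3)^2 + (21413/209715200::real)*(y0 - y4)^2 + (3049663/14680064000::real)*(y0 + y5)^2 + (25789/1048576000::real)*(y0 + y6)^2 + (113629/2097152000::real)*(y0 + y7)^2 + (228979/2097152000::real)*(y0 - y8)^2 + (1317/1048576000::real)*(y0 + y9)^2 + (7293/131072000::real)*(y0 + y10)^2 + (769/83886080::real)*(y0 - y11)^2 + (69911/2097152000::real)*(y0 - y12)^2 + (5247/2097152000::real)*(y0 + y13)^2 + (435312767/8589934592000::real)*(y1 + y2)^2 + (6111961507/60129542144000::real)*(y1 - y3)^2 + (95742133/171798691840::real)*(y1 + y4)^2 + (785402563/8589934592000::real)*(y1 + y5)^2 + (3869886073/30064771072000::real)*(y1 + y6)^2 + (438992929/8589934592000::real)*(y1 - y7)^2 + (357529711/8589934592000::real)*(y1 + y8)^2 + (888421129/4294967296000::real)*(y1 - y9)^2 + (56528193/536870912000::real)*(y1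 - y10)^2 + (691614733/8589934592000::real)*(y1 + y11)^2 + (800353251/8589934592000::real)*(y1 + y12)^2 + (768355179/8589934592000::real)*(y1 - y13)^2 + (1403853691/8589934592000::real)*(y2 - y3)^2 + (134679727/858993459200::real)*(y2 + y4)^2 + (1070422279/8589934592000::real)*(y2 - y5)^2 + (24197121/858993459200::real)*(y2 - y6)^2 + (2201070109/8589934592000::real)*(y2 + y7)^2 + (2274138353/8589934592000::real)*(y2 + y8)^2 + (181442383/4294967296000::real)*(y2 + y9)^2 + (21529831/536870912000::real)*(y2 - y10)^2 + (417844107/8589934592000::real)*(y2 + y11)^2 + (37122697/1717986918400::real)*(y2 + y12)^2 + (727440953/8589934592000::real)*(y2 - y13)^2 + (204265599/858993459200::real)*(y3 - y4)^2 + (312547677/8589934592000::real)*(y3 - y5)^2 + (185117819/2147483648000::real)*(y3 - y6)^2 + (270106519/1717986918400::real)*(y3 - y7)^2 + (913698821/8589934592000::real)*(y3 - y8)^2 + (214109231/2147483648000::real)*(y3 + y9)^2 + (13936589/858993459200::real)*(y3 + y10)^2 + (111824853/1717986918400::real)*(y3 - y11)^2 + (219586139/8589934592000::real)*(y3 - y12)^2 + (3584929613/60129542144000::real)*(y3 + y13)^2 + (217080159/2147483648000::real)*(y4 + y5)^2 + (16353616981/30064771072000::real)*(y4 + y6)^2 + (59042321/858993459200::real)*(y4 - y7)^2 + (827100423/2147483648000::real)*(y4 + y8)^2 + (525265079/1073741824000::real)*(y4 - y9)^2 + (140146919/4294967296000::real)*(y4 - y10)^2 + (1693385779/4294967296000::real)*(y4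 + y11)^2 + (887348509/2147483648000::real)*(y4 + y12)^2 + (389667829/2147483648000::real)*(y4 - y13)^2 + (602982401/4294967296000::real)*(y5 - y6)^2 + (12230629/343597383680::real)*(y5 + y7)^2 + (4192973231/8589934592000::real)*(y5 - y8)^2 + (45488859/536870912000::real)*(y5 - y9)^2 + (212338143/1073741824000::real)*(y5 - y10)^2 + (650163329/8589934592000::real)*(y5 - y11)^2 + (4384977/343597383680::real)*(y5 - y12)^2 + (363862127/1717986918400::real)*(y5 - y13)^2 + (1741270753/4294967296000::real)*(y6 - y7)^2 + (341937221/4294967296000::real)*(y6 + y8)^2 + (928255977/4294967296000::real)*(y6 - y9)^2 + (234006171/2147483648000::real)*(y6 + y10)^2 + (380722637/4294967296000::real)*(y6 - y11)^2 + (4557757/429496729600::real)*(y6 + y12)^2 + (9054899/429496729600::real)*(y6 - y13)^2 + (2897680611/8589934592000::real)*(y7 - y8)^2 + (4188654427/8589934592000::real)*(y7 + y9)^2 + (130922569/343597383680::real)*(y7 + y10)^2 + (40695447/85899345920::real)*(y7 - y11)^2 + (19107087/1073741824000::real)*(y7 - y12)^2 + (1746988309/4294967296000::real)*(y7 - y13)^2 + (3903430903/8589934592000::real)*(y8 + y9)^2 + (95596733/268435456000::real)*(y8 + y10)^2 + (850028551/2147483648000::real)*(y8 + y11)^2 + (1788242029/8589934592000::real)*(y8 - y12)^2 + (193206541/1717986918400::real)*(y8 + y13)^2 + (1450618087/2147483648000::real)*(y9 - y10)^2 + (432978911/1717986918400::real)*(y9 + y11)^2 + (161707703/858993459200::real)*(y9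 - y12)^2 + (1795549459/8589934592000::real)*(y9 + y13)^2 + (411680737/4294967296000::real)*(y10 + y11)^2 + (161698317/2147483648000::real)*(y10 - y12)^2 + (1930523359/8589934592000::real)*(y10 + y13)^2 + (1955812977/8589934592000::real)*(y11 - y12)^2 + (710501039/4294967296000::real)*(y11 - y13)^2 + (89423577/429496729600::real)*(y12 - y13)^2)"
    by (intro add_nonneg_nonneg mult_nonneg_nonneg zero_le_power2) simp_all
  ultimately show ?thesis by simp
qed

lemma sosA1: fixes y0 y1 y2 y3 y4 :: real
  shows "0 \<le> ((11/350::real)*(y0)*(y0) + (31/500::real)*(y0)*(y1) + -(4/125::real)*(y0)*(y2) + (11/125::real)*(y0)*(y3) + -(4/125::real)*(y0)*(y4) + (44/125::real)*(y1)*(y1) + -(29/125::real)*(y1)*(y2) + -(49/500::real)*(y1)*(y3) + -(3/250::real)*(y1)*(y4) + (11/125::real)*(y2)*(y2) + -(1/25::real)*(y2)*(y3) + (1/100::real)*(y2)*(y4) + (359/1000::real)*(y3)*(y3) + -(53/250::real)*(y3)*(y4) + (31/500::real)*(y4)*(y4))"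
proof -
  have "((11/350::real)*(y0)*(y0) + (31/500::real)*(y0)*(y1) + -(4/125::real)*(y0)*(y2) + (11/125::real)*(y0)*(y3) + -(4/125::real)*(y0)*(y4) + (44/125::real)*(y1)*(y1) + -(29/125::real)*(y1)*(y2) + -(49/500::real)*(y1)*(y3) + -(3/250::real)*(y1)*(y4) + (11/125::real)*(y2)*(y2) + -(1/25::real)*(y2)*(y3) + (1/100::real)*(y2)*(y4) + (359/1000::real)*(y3)*(y3) + -(53/250::real)*(y3)*(y4) + (31/500::real)*(y4)*(y4)) = ((85/4096::real)*((1::real)*y0 + (6109/4096::real)*y1 + -(3153/4096::real)*y2 + (271/128::real)*y3 + -(3153/4096::real)*y4)^2 + (151/512::real)*((1::real)*y1 + -(1279/4096::real)*y2 + -(1591/4096::real)*y3 + (31/512::real)*y4)^2 + (37/1024::real)*((1::real)*y2 + -(2475/4096::real)*y3 + -(49/1024::real)*y4)^2 + (101/512::real)*((1::real)*y3 + -(687/2048::real)*y4)^2 + (1/64::real)*((1::real)*y4)^2 + (154312217/14680064000::real)*y0^2 + (92120243441/8589934592000::real)*y1^2 + (90880981277/8589934592000::real)*y2^2 + (22979382599/2147483648000::real)*y3^2 + (90503564093/8589934592000::real)*y4^2 + (103587/2097152000::real)*(y0 + y1)^2 + (53807/2097152000::real)*(y0 - y2)^2 + (4209/65536000::real)*(y0 + y3)^2 + (53807/2097152000::real)*(y0 - y4)^2 + (720710547/8589934592000::real)*(y1 - y2)^2 + (7408781/268435456000::real)*(y1 + y3)^2 + (271297427/8589934592000::real)*(y1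 - y4)^2 + (25097771/214748364800::real)*(y2 - y3)^2 + (14058067/1717986918400::real)*(y2 + y4)^2 + (61995297/536870912000::real)*(y3 - y4)^2)"
    by algebra
  moreover have "0 \<le> ((85/4096::real)*((1::real)*y0 + (6109/4096::real)*y1 + -(3153/4096::real)*y2 + (271/128::real)*y3 + -(3153/4096::real)*y4)^2 + (151/512::real)*((1::real)*y1 + -(1279/4096::real)*y2 + -(1591/4096::real)*y3 + (31/512::real)*y4)^2 + (37/1024::real)*((1::real)*y2 + -(2475/4096::real)*y3 + -(49/1024::real)*y4)^2 + (101/512::real)*((1::real)*y3 + -(687/2048::real)*y4)^2 + (1/64::real)*((1::real)*y4)^2 + (154312217/14680064000::real)*y0^2 + (92120243441/8589934592000::real)*y1^2 + (90880981277/8589934592000::real)*y2^2 + (22979382599/2147483648000::real)*y3^2 + (90503564093/8589934592000::real)*y4^2 + (103587/2097152000::real)*(y0 + y1)^2 + (53807/2097152000::real)*(y0 - y2)^2 + (4209/65536000::real)*(y0 + y3)^2 + (53807/2097152000::real)*(y0 - y4)^2 + (720710547/8589934592000::real)*(y1 - y2)^2 + (7408781/268435456000::real)*(y1 + y3)^2 + (271297427/8589934592000::real)*(y1 - y4)^2 + (25097771/214748364800::real)*(y2 - y3)^2 + (14058067/1717986918400::real)*(y2 + y4)^2 + (61995297/536870912000::real)*(y3 - y4)^2)"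
    by (intro add_nonneg_nonneg mult_nonneg_nonneg zero_le_power2) simp_all
  ultimately show ?thesis by simp
qed

lemma sosA2: fixes y0 y1 y2 y3 :: real
  shows "0 \<le> ((59/500::real)*(y0)*(y0) + -(51/500::real)*(y0)*(y1) + -(33/250::real)*(y0)*(y2) + (9/250::real)*(y0)*(y3) + (217/1000::real)*(y1)*(y1) + -(13/125::real)*(y1)*(y2) + -(1/500::real)*(y1)*(y3) + (131/500::real)*(y2)*(y2) + -(51/125::real)*(y2)*(y3) + (127/500::real)*(y3)*(y3))"
proof -
  have "((59/500::real)*(y0)*(y0) + -(51/500::real)*(y0)*(y1) + -(33/250::real)*(y0)*(y2) + (9/250::real)*(y0)*(y3) + (217/1000::real)*(y1)*(y1) + -(13/125::real)*(y1)*(y2) + -(1/500::real)*(y1)*(y3) + (131/500::real)*(y2)*(y2) + -(51/125::real)*(y2)*(y3) + (127/500::real)*(y3)*(y3)) = ((441/4096::real)*((1::real)*y0 + -(969/2048::real)*y1 + -(2507/4096::real)*y2 + (171/1024::real)*y3)^2 + (187/1024::real)*((1::real)*y1 + -(933/2048::real)*y2 + (21/512::real)*y3)^2 + (355/2048::real)*((1::real)*y2 + -(4475/4096::real)*y3)^2 + (17/512::real)*((1::real)*y3)^2 + (21292541/2097152000::real)*y0^2 + (43765959449/4294967296000::real)*y1^2 + (86799585173/8589934592000::real)*y2^2 + (44425349143/4294967296000::real)*y3^2 + (61251/1048576000::real)*(y0 - y1)^2 + (213657/2097152000::real)*(y0 - y2)^2 + (10809/524288000::real)*(y0 + y3)^2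 + (64083233/4294967296000::real)*(y1 + y2)^2 + (17919551/1073741824000::real)*(y1 + y3)^2 + (438960067/2147483648000::real)*(y2 - y3)^2)"
    by algebra
  moreover have "0 \<le> ((441/4096::real)*((1::real)*y0 + -(969/2048::real)*y1 + -(2507/4096::real)*y2 + (171/1024::real)*y3)^2 + (187/1024::real)*((1::real)*y1 + -(933/2048::real)*y2 + (21/512::real)*y3)^2 + (355/2048::real)*((1::real)*y2 + -(4475/4096::real)*y3)^2 + (17/512::real)*((1::real)*y3)^2 + (21292541/2097152000::real)*y0^2 + (43765959449/4294967296000::real)*y1^2 + (86799585173/8589934592000::real)*y2^2 + (44425349143/4294967296000::real)*y3^2 + (61251/1048576000::real)*(y0 - y1)^2 + (213657/2097152000::real)*(y0 - y2)^2 + (10809/524288000::real)*(y0 + y3)^2 + (64083233/4294967296000::real)*(y1 + y2)^2 + (17919551/1073741824000::real)*(y1 + y3)^2 + (438960067/2147483648000::real)*(y2 - y3)^2)"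
    by (intro add_nonneg_nonneg mult_nonneg_nonneg zero_le_power2) simp_all
  ultimately show ?thesis by simp
qed

lemma claimA: fixes c1 t1 c2 t2 :: real
  assumes e1: "c1^2 + 7*t1^2 = 1" and e2: "c2^2 + 7*t2^2 = 1"
    and H: "0 \<le> 3 - 5*c1 - c2 + 3*c1*c2 + 21*t1*t2 - 7*(t1 + t2 + t1*c2 - c1*t2)" and G: "0 \<le> 2*c1 + 2*c2 + c1*c2 + 7*t1*t2 - 3"
  shows "t1 \<le> 0"
proof -
  have i0: "0 \<le> ((33/125::real)*(t2)*(t2) + -(1/10::real)*(t2)*((c2 - 1)) + -(46/125::real)*(t2)*(t1) + -(3/25::real)*(t2)*((c1 - 1)) + -(63/100::real)*(t2)*(t2^2) + (16251/14000::real)*(t2)*((c2 - 1)*t2) + -(11/500::real)*(t2)*((c2 - 1)^2) + (51/250::real)*(t2)*(t1*t2) + -(201/250::real)*(t2)*(t1*(c2 - 1)) + -(83/500::real)*(t2)*(t1^2) + (213/1000::real)*(t2)*((c1 - 1)*t2) + -(1/10::real)*(t2)*((c1 - 1)*(c2 - 1)) + -(42/125::real)*(t2)*((c1 - 1)*t1) + -(7/250::real)*(t2)*((c1 - 1)^2) + (441/1000::real)*((c2 - 1))*((c2 - 1)) + (13/250::real)*((c2 - 1))*(t1) + -(1121/3500::real)*((c2 - 1))*((c1 - 1)) + (12/5::real)*((c2 - 1))*(t2^2) + (89/500::real)*((c2 - 1))*((c2 - 1)*t2) + (4827/14000::real)*((c2 - 1))*((c2 - 1)^2) + -(28/125::real)*((c2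 - 1))*(t1*t2) + (183/500::real)*((c2 - 1))*(t1*(c2 - 1)) + -(106/125::real)*((c2 - 1))*(t1^2) + -(289/500::real)*((c2 - 1))*((c1 - 1)*t2) + (99/500::real)*((c2 - 1))*((c1 - 1)*(c2 - 1)) + (89/250::real)*((c2 - 1))*((c1 - 1)*t1) + -(28/125::real)*((c2 - 1))*((c1 - 1)^2) + (26/125::real)*(t1)*(t1) + (1/250::real)*(t1)*((c1 - 1)) + (37/100::real)*(t1)*(t2^2) + -(103/125::real)*(t1)*((c2 - 1)*t2) + -(1/100::real)*(t1)*((c2 - 1)^2) + (27/500::real)*(t1)*(t1*t2) + (167/250::real)*(t1)*(t1*(c2 - 1)) + (49/250::real)*(t1)*(t1^2) + -(63/500::real)*(t1)*((c1 - 1)*t2) + (23/250::real)*(t1)*((c1 - 1)*(c2 - 1)) + (89/400::real)*(t1)*((c1 - 1)*t1) + -(9/500::real)*(t1)*((c1 - 1)^2) + (79/200::real)*((c1 - 1))*((c1 - 1)) + -(69/100::real)*((c1 - 1))*(t2^2) + -(131/500::real)*((c1 - 1))*((c2 - 1)*t2) + -(32/125::real)*((c1 - 1))*((c2 - 1)^2) + (43/100::real)*((c1 - 1))*(t1*t2) + (28/125::real)*((c1 - 1))*(t1*(c2 - 1)) + (361/250::real)*((c1 - 1))*(t1^2) + -(4/25::real)*((c1 - 1))*((c1 - 1)*t2) + (4/25::real)*((c1 - 1))*((c1 - 1)*(c2 - 1)) + (129/250::real)*((c1 - 1))*((c1 - 1)*t1) + (4581/14000::real)*((c1 - 1))*((c1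 - 1)^2) + (1409/250::real)*(t2^2)*(t2^2) + -(917/500::real)*(t2^2)*((c2 - 1)*t2) + (3347/7000::real)*(t2^2)*((c2 - 1)^2) + -(777/200::real)*(t2^2)*(t1*t2) + (1301/500::real)*(t2^2)*(t1*(c2 - 1)) + -(623/250::real)*(t2^2)*(t1^2) + -(539/500::real)*(t2^2)*((c1 - 1)*t2) + (1273/1000::real)*(t2^2)*((c1 - 1)*(c2 - 1)) + (329/250::real)*(t2^2)*((c1 - 1)*t1) + -(373/500::real)*(t2^2)*((c1 - 1)^2) + (731/250::real)*((c2 - 1)*t2)*((c2 - 1)*t2) + -(131/500::real)*((c2 - 1)*t2)*((c2 - 1)^2) + (37/20::real)*((c2 - 1)*t2)*(t1*t2) + -(1993/500::real)*((c2 - 1)*t2)*(t1*(c2 - 1)) + (17/125::real)*((c2 - 1)*t2)*(t1^2) + -(158/125::real)*((c2 - 1)*t2)*((c1 - 1)*t2) + (63/500::real)*((c2 - 1)*t2)*((c1 - 1)*(c2 - 1)) + -(1/20::real)*((c2 - 1)*t2)*((c1 - 1)*t1) + -(3/50::real)*((c2 - 1)*t2)*((c1 - 1)^2) + (371/1000::real)*((c2 - 1)^2)*((c2 - 1)^2) + -(193/500::real)*((c2 - 1)^2)*(t1*t2) + (51/500::real)*((c2 - 1)^2)*(t1*(c2 - 1)) + -(187/500::real)*((c2 - 1)^2)*(t1^2) + (127/500::real)*((c2 - 1)^2)*((c1 - 1)*t2) + -(68/125::real)*((c2 - 1)^2)*((c1 - 1)*(c2 - 1)) + (9/100::real)*((c2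 - 1)^2)*((c1 - 1)*t1) + -(13/100::real)*((c2 - 1)^2)*((c1 - 1)^2) + (868/125::real)*(t1*t2)*(t1*t2) + -(383/500::real)*(t1*t2)*(t1*(c2 - 1)) + -(6363/1000::real)*(t1*t2)*(t1^2) + -(49/10::real)*(t1*t2)*((c1 - 1)*t2) + (1/20::real)*(t1*t2)*((c1 - 1)*(c2 - 1)) + (2599/1000::real)*(t1*t2)*((c1 - 1)*t1) + (371/500::real)*(t1*t2)*((c1 - 1)^2) + (413/125::real)*(t1*(c2 - 1))*(t1*(c2 - 1)) + (343/1000::real)*(t1*(c2 - 1))*(t1^2) + -(207/500::real)*(t1*(c2 - 1))*((c1 - 1)*t2) + -(63/500::real)*(t1*(c2 - 1))*((c1 - 1)*(c2 - 1)) + -(1449/1000::real)*(t1*(c2 - 1))*((c1 - 1)*t1) + (12/25::real)*(t1*(c2 - 1))*((c1 - 1)^2) + (651/125::real)*(t1^2)*(t1^2) + (264/125::real)*(t1^2)*((c1 - 1)*t2) + -(17/100::real)*(t1^2)*((c1 - 1)*(c2 - 1)) + -(42/25::real)*(t1^2)*((c1 - 1)*t1) + (529/1000::real)*(t1^2)*((c1 - 1)^2) + (1281/500::real)*((c1 - 1)*t2)*((c1 - 1)*t2) + -(253/500::real)*((c1 - 1)*t2)*((c1 - 1)*(c2 - 1)) + -(477/250::real)*((c1 - 1)*t2)*((c1 - 1)*t1) + -(223/500::real)*((c1 - 1)*t2)*((c1 - 1)^2) + (329/500::real)*((c1 - 1)*(c2 - 1))*((c1 - 1)*(c2 - 1))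 + (86/125::real)*((c1 - 1)*(c2 - 1))*((c1 - 1)*t1) + -(67/250::real)*((c1 - 1)*(c2 - 1))*((c1 - 1)^2) + (993/500::real)*((c1 - 1)*t1)*((c1 - 1)*t1) + -(6/25::real)*((c1 - 1)*t1)*((c1 - 1)^2) + (253/1000::real)*((c1 - 1)^2)*((c1 - 1)^2))"
    by (rule sosA0[of "t2" "(c2 - 1)" "t1" "(c1 - 1)" "t2^2" "(c2 - 1)*t2" "(c2 - 1)^2" "t1*t2" "t1*(c2 - 1)" "t1^2" "(c1 - 1)*t2" "(c1 - 1)*(c2 - 1)" "(c1 - 1)*t1" "(c1 - 1)^2"])
  have i1: "0 \<le> ((11/350::real)*(1)*(1) + (31/500::real)*(1)*(t2) + -(4/125::real)*(1)*((c2 - 1)) + (11/125::real)*(1)*(t1) + -(4/125::real)*(1)*((c1 - 1)) + (44/125::real)*(t2)*(t2) + -(29/125::real)*(t2)*((c2 - 1)) + -(49/500::real)*(t2)*(t1) + -(3/250::real)*(t2)*((c1 - 1)) + (11/125::real)*((c2 - 1))*((c2 - 1)) + -(1/25::real)*((c2 - 1))*(t1) + (1/100::real)*((c2 - 1))*((c1 - 1)) + (359/1000::real)*(t1)*(t1) + -(53/250::real)*(t1)*((c1 - 1)) + (31/500::real)*((c1 - 1))*((c1 - 1)))"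
    by (rule sosA1[of "1" "t2" "(c2 - 1)" "t1" "(c1 - 1)"])
  have i2: "0 \<le> ((59/500::real)*(t2)*(t2) + -(51/500::real)*(t2)*((c2 - 1)) + -(33/250::real)*(t2)*(t1) + (9/250::real)*(t2)*((c1 - 1)) + (217/1000::real)*((c2 - 1))*((c2 - 1)) + -(13/125::real)*((c2 - 1))*(t1) + -(1/500::real)*((c2 - 1))*((c1 - 1)) + (131/500::real)*(t1)*(t1) + -(51/125::real)*(t1)*((c1 - 1)) + (127/500::real)*((c1 - 1))*((c1 - 1)))"
    by (rule sosA2[of "t2" "(c2 - 1)" "t1" "(c1 - 1)"])
  have id: "- t1 = ((33/125::real)*(t2)*(t2) + -(1/10::real)*(t2)*((c2 - 1)) + -(46/125::real)*(t2)*(t1) + -(3/25::real)*(t2)*((c1 - 1)) + -(63/100::real)*(t2)*(t2^2) + (16251/14000::real)*(t2)*((c2 - 1)*t2) + -(11/500::real)*(t2)*((c2 - 1)^2) + (51/250::real)*(t2)*(t1*t2) + -(201/250::real)*(t2)*(t1*(c2 - 1)) + -(83/500::real)*(t2)*(t1^2) + (213/1000::real)*(t2)*((c1 - 1)*t2) + -(1/10::real)*(t2)*((c1 - 1)*(c2 - 1)) + -(42/125::real)*(t2)*((c1 - 1)*t1) + -(7/250::real)*(t2)*((c1 - 1)^2) + (441/1000::real)*((c2 - 1))*((c2 - 1)) + (13/250::real)*((c2 - 1))*(t1) + -(1121/3500::real)*((c2 - 1))*((c1 - 1)) + (12/5::real)*((c2 - 1))*(t2^2) + (89/500::real)*((c2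 - 1))*((c2 - 1)*t2) + (4827/14000::real)*((c2 - 1))*((c2 - 1)^2) + -(28/125::real)*((c2 - 1))*(t1*t2) + (183/500::real)*((c2 - 1))*(t1*(c2 - 1)) + -(106/125::real)*((c2 - 1))*(t1^2) + -(289/500::real)*((c2 - 1))*((c1 - 1)*t2) + (99/500::real)*((c2 - 1))*((c1 - 1)*(c2 - 1)) + (89/250::real)*((c2 - 1))*((c1 - 1)*t1) + -(28/125::real)*((c2 - 1))*((c1 - 1)^2) + (26/125::real)*(t1)*(t1) + (1/250::real)*(t1)*((c1 - 1)) + (37/100::real)*(t1)*(t2^2) + -(103/125::real)*(t1)*((c2 - 1)*t2) + -(1/100::real)*(t1)*((c2 - 1)^2) + (27/500::real)*(t1)*(t1*t2) + (167/250::real)*(t1)*(t1*(c2 - 1)) + (49/250::real)*(t1)*(t1^2) + -(63/500::real)*(t1)*((c1 - 1)*t2) + (23/250::real)*(t1)*((c1 - 1)*(c2 - 1)) + (89/400::real)*(t1)*((c1 - 1)*t1) + -(9/500::real)*(t1)*((c1 - 1)^2) + (79/200::real)*((c1 - 1))*((c1 - 1)) + -(69/100::real)*((c1 - 1))*(t2^2) + -(131/500::real)*((c1 - 1))*((c2 - 1)*t2) + -(32/125::real)*((c1 - 1))*((c2 - 1)^2) + (43/100::real)*((c1 - 1))*(t1*t2) + (28/125::real)*((c1 - 1))*(t1*(c2 - 1)) + (361/250::real)*((c1 - 1))*(t1^2) + -(4/25::real)*((c1 - 1))*((c1 - 1)*t2) + (4/25::real)*((c1 - 1))*((c1 - 1)*(c2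 - 1)) + (129/250::real)*((c1 - 1))*((c1 - 1)*t1) + (4581/14000::real)*((c1 - 1))*((c1 - 1)^2) + (1409/250::real)*(t2^2)*(t2^2) + -(917/500::real)*(t2^2)*((c2 - 1)*t2) + (3347/7000::real)*(t2^2)*((c2 - 1)^2) + -(777/200::real)*(t2^2)*(t1*t2) + (1301/500::real)*(t2^2)*(t1*(c2 - 1)) + -(623/250::real)*(t2^2)*(t1^2) + -(539/500::real)*(t2^2)*((c1 - 1)*t2) + (1273/1000::real)*(t2^2)*((c1 - 1)*(c2 - 1)) + (329/250::real)*(t2^2)*((c1 - 1)*t1) + -(373/500::real)*(t2^2)*((c1 - 1)^2) + (731/250::real)*((c2 - 1)*t2)*((c2 - 1)*t2) + -(131/500::real)*((c2 - 1)*t2)*((c2 - 1)^2) + (37/20::real)*((c2 - 1)*t2)*(t1*t2) + -(1993/500::real)*((c2 - 1)*t2)*(t1*(c2 - 1)) + (17/125::real)*((c2 - 1)*t2)*(t1^2) + -(158/125::real)*((c2 - 1)*t2)*((c1 - 1)*t2) + (63/500::real)*((c2 - 1)*t2)*((c1 - 1)*(c2 - 1)) + -(1/20::real)*((c2 - 1)*t2)*((c1 - 1)*t1) + -(3/50::real)*((c2 - 1)*t2)*((c1 - 1)^2) + (371/1000::real)*((c2 - 1)^2)*((c2 - 1)^2) + -(193/500::real)*((c2 - 1)^2)*(t1*t2) + (51/500::real)*((c2 - 1)^2)*(t1*(c2 - 1)) + -(187/500::real)*((c2 - 1)^2)*(t1^2) + (127/500::real)*((c2 - 1)^2)*((c1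 - 1)*t2) + -(68/125::real)*((c2 - 1)^2)*((c1 - 1)*(c2 - 1)) + (9/100::real)*((c2 - 1)^2)*((c1 - 1)*t1) + -(13/100::real)*((c2 - 1)^2)*((c1 - 1)^2) + (868/125::real)*(t1*t2)*(t1*t2) + -(383/500::real)*(t1*t2)*(t1*(c2 - 1)) + -(6363/1000::real)*(t1*t2)*(t1^2) + -(49/10::real)*(t1*t2)*((c1 - 1)*t2) + (1/20::real)*(t1*t2)*((c1 - 1)*(c2 - 1)) + (2599/1000::real)*(t1*t2)*((c1 - 1)*t1) + (371/500::real)*(t1*t2)*((c1 - 1)^2) + (413/125::real)*(t1*(c2 - 1))*(t1*(c2 - 1)) + (343/1000::real)*(t1*(c2 - 1))*(t1^2) + -(207/500::real)*(t1*(c2 - 1))*((c1 - 1)*t2) + -(63/500::real)*(t1*(c2 - 1))*((c1 - 1)*(c2 - 1)) + -(1449/1000::real)*(t1*(c2 - 1))*((c1 - 1)*t1) + (12/25::real)*(t1*(c2 - 1))*((c1 - 1)^2) + (651/125::real)*(t1^2)*(t1^2) + (264/125::real)*(t1^2)*((c1 - 1)*t2) + -(17/100::real)*(t1^2)*((c1 - 1)*(c2 - 1)) + -(42/25::real)*(t1^2)*((c1 - 1)*t1) + (529/1000::real)*(t1^2)*((c1 - 1)^2) + (1281/500::real)*((c1 - 1)*t2)*((c1 - 1)*t2) + -(253/500::real)*((c1 - 1)*t2)*((c1 - 1)*(c2 - 1)) + -(477/250::real)*((c1 - 1)*t2)*((c1 - 1)*t1) + -(223/500::real)*((c1 - 1)*t2)*((c1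 - 1)^2) + (329/500::real)*((c1 - 1)*(c2 - 1))*((c1 - 1)*(c2 - 1)) + (86/125::real)*((c1 - 1)*(c2 - 1))*((c1 - 1)*t1) + -(67/250::real)*((c1 - 1)*(c2 - 1))*((c1 - 1)^2) + (993/500::real)*((c1 - 1)*t1)*((c1 - 1)*t1) + -(6/25::real)*((c1 - 1)*t1)*((c1 - 1)^2) + (253/1000::real)*((c1 - 1)^2)*((c1 - 1)^2)) + ((11/350::real)*(1)*(1) + (31/500::real)*(1)*(t2) + -(4/125::real)*(1)*((c2 - 1)) + (11/125::real)*(1)*(t1) + -(4/125::real)*(1)*((c1 - 1)) + (44/125::real)*(t2)*(t2) + -(29/125::real)*(t2)*((c2 - 1)) + -(49/500::real)*(t2)*(t1) + -(3/250::real)*(t2)*((c1 - 1)) + (11/125::real)*((c2 - 1))*((c2 - 1)) + -(1/25::real)*((c2 - 1))*(t1) + (1/100::real)*((c2 - 1))*((c1 - 1)) + (359/1000::real)*(t1)*(t1) + -(53/250::real)*(t1)*((c1 - 1)) + (31/500::real)*((c1 - 1))*((c1 - 1))) * (3 - 5*c1 - c2 + 3*c1*c2 + 21*t1*t2 - 7*(t1 + t2 + t1*c2 - c1*t2)) + ((59/500::real)*(t2)*(t2) + -(51/500::real)*(t2)*((c2 - 1)) + -(33/250::real)*(t2)*(t1) + (9/250::real)*(t2)*((c1 - 1)) + (217/1000::real)*((c2 - 1))*((c2 - 1)) + -(13/125::real)*((c2 - 1))*(t1) + -(1/500::real)*((c2 - 1))*((c1 - 1)) + (131/500::real)*(t1)*(t1)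 + -(51/125::real)*(t1)*((c1 - 1)) + (127/500::real)*((c1 - 1))*((c1 - 1))) * (2*c1 + 2*c2 + c1*c2 + 7*t1*t2 - 3) + (1/50::real) * (3 - 5*c1 - c2 + 3*c1*c2 + 21*t1*t2 - 7*(t1 + t2 + t1*c2 - c1*t2)) * (2*c1 + 2*c2 + c1*c2 + 7*t1*t2 - 3) + ((1/14::real)*1 + -(41/250::real)*t2 + -(19/250::real)*(c2 - 1) + (69/100::real)*t1 + -(6429/14000::real)*(c1 - 1) + -(131/500::real)*t2^2 + (89/250::real)*(c2 - 1)*t2 + -(203/500::real)*(c2 - 1)^2 + -(43/100::real)*t1*t2 + (31/100::real)*t1*(c2 - 1) + -(93/125::real)*t1^2 + (3/250::real)*(c1 - 1)*t2 + -(43/250::real)*(c1 - 1)*(c2 - 1) + (6/25::real)*(c1 - 1)*t1 + -(253/1000::real)*(c1 - 1)^2) * (c1^2 + 7*t1^2 - 1) + (-(1/14::real)*1 + (9/100::real)*t2 + -(6017/14000::real)*(c2 - 1) + (109/250::real)*t1 + (131/1000::real)*(c1 - 1) + -(1409/1750::real)*t2^2 + (131/500::real)*(c2 - 1)*t2 + -(371/1000::real)*(c2 - 1)^2 + -(619/1000::real)*t1*t2 + (257/500::real)*t1*(c2 - 1) + -(46/125::real)*t1^2 + -(99/500::real)*(c1 - 1)*t2 + (63/1000::real)*(c1 - 1)*(c2 - 1) + (47/100::real)*(c1 - 1)*t1 + -(21/100::real)*(c1 - 1)^2) * (c2^2 + 7*t2^2 - 1)"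
    by algebra
  have j1: "0 \<le> ((11/350::real)*(1)*(1) + (31/500::real)*(1)*(t2) + -(4/125::real)*(1)*((c2 - 1)) + (11/125::real)*(1)*(t1) + -(4/125::real)*(1)*((c1 - 1)) + (44/125::real)*(t2)*(t2) + -(29/125::real)*(t2)*((c2 - 1)) + -(49/500::real)*(t2)*(t1) + -(3/250::real)*(t2)*((c1 - 1)) + (11/125::real)*((c2 - 1))*((c2 - 1)) + -(1/25::real)*((c2 - 1))*(t1) + (1/100::real)*((c2 - 1))*((c1 - 1)) + (359/1000::real)*(t1)*(t1) + -(53/250::real)*(t1)*((c1 - 1)) + (31/500::real)*((c1 - 1))*((c1 - 1))) * (3 - 5*c1 - c2 + 3*c1*c2 + 21*t1*t2 - 7*(t1 + t2 + t1*c2 - c1*t2))" using i1 H by (rule mult_nonneg_nonneg)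
  have j2: "0 \<le> ((59/500::real)*(t2)*(t2) + -(51/500::real)*(t2)*((c2 - 1)) + -(33/250::real)*(t2)*(t1) + (9/250::real)*(t2)*((c1 - 1)) + (217/1000::real)*((c2 - 1))*((c2 - 1)) + -(13/125::real)*((c2 - 1))*(t1) + -(1/500::real)*((c2 - 1))*((c1 - 1)) + (131/500::real)*(t1)*(t1) + -(51/125::real)*(t1)*((c1 - 1)) + (127/500::real)*((c1 - 1))*((c1 - 1))) * (2*c1 + 2*c2 + c1*c2 + 7*t1*t2 - 3)" using i2 G by (rule mult_nonneg_nonneg)
  have j3: "0 \<le> (1/50::real) * (3 - 5*c1 - c2 + 3*c1*c2 + 21*t1*t2 - 7*(t1 + t2 + t1*c2 - c1*t2)) * (2*c1 + 2*c2 + c1*c2 + 7*t1*t2 - 3)" by (intro mult_nonneg_nonneg H G) simp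
  have j4: "((1/14::real)*1 + -(41/250::real)*t2 + -(19/250::real)*(c2 - 1) + (69/100::real)*t1 + -(6429/14000::real)*(c1 - 1) + -(131/500::real)*t2^2 + (89/250::real)*(c2 - 1)*t2 + -(203/500::real)*(c2 - 1)^2 + -(43/100::real)*t1*t2 + (31/100::real)*t1*(c2 - 1) + -(93/125::real)*t1^2 + (3/250::real)*(c1 - 1)*t2 + -(43/250::real)*(c1 - 1)*(c2 - 1) + (6/25::real)*(c1 - 1)*t1 + -(253/1000::real)*(c1 - 1)^2) * (c1^2 + 7*t1^2 - 1) = 0" using e1 by simp
  have j5: "(-(1/14::real)*1 + (9/100::real)*t2 + -(6017/14000::real)*(c2 - 1) + (109/250::real)*t1 + (131/1000::real)*(c1 - 1) + -(1409/1750::real)*t2^2 + (131/500::real)*(c2 - 1)*t2 + -(371/1000::real)*(c2 - 1)^2 + -(619/1000::real)*t1*t2 + (257/500::real)*t1*(c2 - 1) + -(46/125::real)*t1^2 + -(99/500::real)*(c1 - 1)*t2 + (63/1000::real)*(c1 - 1)*(c2 - 1) + (47/100::real)*(c1 - 1)*t1 + -(21/100::real)*(c1 - 1)^2) * (c2^2 + 7*t2^2 - 1) = 0" using e2 by simp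
  show ?thesis using combA[OF id i0 j1 j2 j3 j4 j5] .
qed


lemma combB: fixes t a b c d e g :: real shows "t = a + b + c + d + e + g \<Longrightarrow> 0 \<le> a \<Longrightarrow> 0 \<le> b \<Longrightarrow> 0 \<le> c \<Longrightarrow> 0 \<le> d \<Longrightarrow> e = 0 \<Longrightarrow> g = 0 \<Longrightarrow> 0 \<le> t" by linarith

lemma sosB0: fixes y0 y1 y2 y3 y4 y5 y6 y7 y8 y9 y10 y11 y12 y13 :: real
  shows "0 \<le> ((141/500::real)*(y0)*(y0) + (7/125::real)*(y0)*(y1) + -(11/50::real)*(y0)*(y2) + (31/500::real)*(y0)*(y3) + (203/500::real)*(y0)*(y4) + (2727/2000::real)*(y0)*(y5) + (7/250::real)*(y0)*(y6) + (39/1000::real)*(y0)*(y7) + -(29/40::real)*(y0)*(y8) + -(51/1000::real)*(y0)*(y9) + (237/1000::real)*(y0)*(y10) + (167/1000::real)*(y0)*(y11) + -(209/1000::real)*(y0)*(y12) + (17/500::real)*(y0)*(y13) + (487/1000::real)*(y1)*(y1) + (7/250::real)*(y1)*(y2) + -(223/1750::real)*(y1)*(y3) + (219/100::real)*(y1)*(y4) + -(51/250::real)*(y1)*(y5) + (1391/2800::real)*(y1)*(y6) + -(331/500::real)*(y1)*(y7) + -(327/500::real)*(y1)*(y8) + -(487/1000::real)*(y1)*(y9) + (149/500::real)*(y1)*(y10) + (13/100::real)*(y1)*(y11) + -(93/200::real)*(y1)*(y12) + -(19/125::real)*(y1)*(y13) + (11/100::real)*(y2)*(y2) + (17/500::real)*(y2)*(y3)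 + -(23/500::real)*(y2)*(y4) + -(78/125::real)*(y2)*(y5) + (1/100::real)*(y2)*(y6) + -(97/500::real)*(y2)*(y7) + (137/500::real)*(y2)*(y8) + -(133/500::real)*(y2)*(y9) + -(73/500::real)*(y2)*(y10) + -(19/500::real)*(y2)*(y11) + -(123/875::real)*(y2)*(y12) + (1/25::real)*(y2)*(y13) + (213/500::real)*(y3)*(y3) + -(121/500::real)*(y3)*(y4) + (51/250::real)*(y3)*(y5) + -(3/20::real)*(y3)*(y6) + (71/500::real)*(y3)*(y7) + -(47/250::real)*(y3)*(y8) + (781/500::real)*(y3)*(y9) + (8/125::real)*(y3)*(y10) + (27/250::real)*(y3)*(y11) + -(277/500::real)*(y3)*(y12) + (1273/3500::real)*(y3)*(y13) + (539/125::real)*(y4)*(y4) + (98/125::real)*(y4)*(y5) + (3/5::real)*(y4)*(y6) + -(217/125::real)*(y4)*(y7) + -(147/100::real)*(y4)*(y8) + -(1061/500::real)*(y4)*(y9) + (119/100::real)*(y4)*(y10) + (207/250::real)*(y4)*(y11) + -(193/125::real)*(y4)*(y12) + -(197/500::real)*(y4)*(y13) + (2991/1000::real)*(y5)*(y5) + (14/125::real)*(y5)*(y6) + (49/250::real)*(y5)*(y7) + -(1349/500::real)*(y5)*(y8) + -(71/500::real)*(y5)*(y9) + -(183/250::real)*(y5)*(y10) + (111/250::real)*(y5)*(y11) + (21/500::real)*(y5)*(y12) + -(4/125::real)*(y5)*(y13) + (17/40::real)*(y6)*(y6) + -(61/125::real)*(y6)*(y7) + -(19/50::real)*(y6)*(y8)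 + -(89/250::real)*(y6)*(y9) + -(19/250::real)*(y6)*(y10) + -(203/500::real)*(y6)*(y11) + -(131/500::real)*(y6)*(y12) + -(53/500::real)*(y6)*(y13) + (5349/1000::real)*(y7)*(y7) + (156/125::real)*(y7)*(y8) + -(483/200::real)*(y7)*(y9) + (199/50::real)*(y7)*(y10) + (13/100::real)*(y7)*(y11) + -(53/200::real)*(y7)*(y12) + (137/250::real)*(y7)*(y13) + (309/100::real)*(y8)*(y8) + -(1099/1000::real)*(y8)*(y9) + (1/100::real)*(y8)*(y10) + (23/50::real)*(y8)*(y11) + -(279/200::real)*(y8)*(y12) + -(81/250::real)*(y8)*(y13) + (3953/1000::real)*(y9)*(y9) + -(389/500::real)*(y9)*(y10) + -(23/125::real)*(y9)*(y11) + (217/250::real)*(y9)*(y12) + (247/350::real)*(y9)*(y13) + (2923/1000::real)*(y10)*(y10) + (17/50::real)*(y10)*(y11) + -(287/250::real)*(y10)*(y12) + (69/125::real)*(y10)*(y13) + (409/500::real)*(y11)*(y11) + -(267/500::real)*(y11)*(y12) + -(131/500::real)*(y11)*(y13) + (333/200::real)*(y12)*(y12) + (31/250::real)*(y12)*(y13) + (129/500::real)*(y13)*(y13))"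
proof -
  have "((141/500::real)*(y0)*(y0) + (7/125::real)*(y0)*(y1) + -(11/50::real)*(y0)*(y2) + (31/500::real)*(y0)*(y3) + (203/500::real)*(y0)*(y4) + (2727/2000::real)*(y0)*(y5) + (7/250::real)*(y0)*(y6) + (39/1000::real)*(y0)*(y7) + -(29/40::real)*(y0)*(y8) + -(51/1000::real)*(y0)*(y9) + (237/1000::real)*(y0)*(y10) + (167/1000::real)*(y0)*(y11) + -(209/1000::real)*(y0)*(y12) + (17/500::real)*(y0)*(y13) + (487/1000::real)*(y1)*(y1) + (7/250::real)*(y1)*(y2) + -(223/1750::real)*(y1)*(y3) + (219/100::real)*(y1)*(y4) + -(51/250::real)*(y1)*(y5) + (1391/2800::real)*(y1)*(y6) + -(331/500::real)*(y1)*(y7) + -(327/500::real)*(y1)*(y8) + -(487/1000::real)*(y1)*(y9) + (149/500::real)*(y1)*(y10) + (13/100::real)*(y1)*(y11) + -(93/200::real)*(y1)*(y12) + -(19/125::real)*(y1)*(y13) + (11/100::real)*(y2)*(y2) + (17/500::real)*(y2)*(y3) + -(23/500::real)*(y2)*(y4) + -(78/125::real)*(y2)*(y5) + (1/100::real)*(y2)*(y6) + -(97/500::real)*(y2)*(y7) + (137/500::real)*(y2)*(y8) + -(133/500::real)*(y2)*(y9) + -(73/500::real)*(y2)*(y10) + -(19/500::real)*(y2)*(y11) + -(123/875::real)*(y2)*(y12) + (1/25::real)*(y2)*(y13) + (213/500::real)*(y3)*(y3) + -(121/500::real)*(y3)*(y4) + (51/250::real)*(y3)*(y5) + -(3/20::real)*(y3)*(y6)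 + (71/500::real)*(y3)*(y7) + -(47/250::real)*(y3)*(y8) + (781/500::real)*(y3)*(y9) + (8/125::real)*(y3)*(y10) + (27/250::real)*(y3)*(y11) + -(277/500::real)*(y3)*(y12) + (1273/3500::real)*(y3)*(y13) + (539/125::real)*(y4)*(y4) + (98/125::real)*(y4)*(y5) + (3/5::real)*(y4)*(y6) + -(217/125::real)*(y4)*(y7) + -(147/100::real)*(y4)*(y8) + -(1061/500::real)*(y4)*(y9) + (119/100::real)*(y4)*(y10) + (207/250::real)*(y4)*(y11) + -(193/125::real)*(y4)*(y12) + -(197/500::real)*(y4)*(y13) + (2991/1000::real)*(y5)*(y5) + (14/125::real)*(y5)*(y6) + (49/250::real)*(y5)*(y7) + -(1349/500::real)*(y5)*(y8) + -(71/500::real)*(y5)*(y9) + -(183/250::real)*(y5)*(y10) + (111/250::real)*(y5)*(y11) + (21/500::real)*(y5)*(y12) + -(4/125::real)*(y5)*(y13) + (17/40::real)*(y6)*(y6) + -(61/125::real)*(y6)*(y7) + -(19/50::real)*(y6)*(y8) + -(89/250::real)*(y6)*(y9) + -(19/250::real)*(y6)*(y10) + -(203/500::real)*(y6)*(y11) + -(131/500::real)*(y6)*(y12) + -(53/500::real)*(y6)*(y13) + (5349/1000::real)*(y7)*(y7) + (156/125::real)*(y7)*(y8) + -(483/200::real)*(y7)*(y9) + (199/50::real)*(y7)*(y10) + (13/100::real)*(y7)*(y11) + -(53/200::real)*(y7)*(y12) + (137/250::real)*(y7)*(y13) + (309/100::real)*(y8)*(y8) + -(1099/1000::real)*(y8)*(y9)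 + (1/100::real)*(y8)*(y10) + (23/50::real)*(y8)*(y11) + -(279/200::real)*(y8)*(y12) + -(81/250::real)*(y8)*(y13) + (3953/1000::real)*(y9)*(y9) + -(389/500::real)*(y9)*(y10) + -(23/125::real)*(y9)*(y11) + (217/250::real)*(y9)*(y12) + (247/350::real)*(y9)*(y13) + (2923/1000::real)*(y10)*(y10) + (17/50::real)*(y10)*(y11) + -(287/250::real)*(y10)*(y12) + (69/125::real)*(y10)*(y13) + (409/500::real)*(y11)*(y11) + -(267/500::real)*(y11)*(y12) + -(131/500::real)*(y11)*(y13) + (333/200::real)*(y12)*(y12) + (31/250::real)*(y12)*(y13) + (129/500::real)*(y13)*(y13)) = ((277/1024::real)*((1::real)*y0 + (53/512::real)*y1 + -(1665/4096::real)*y2 + (469/4096::real)*y3 + (3/4::real)*y4 + (5159/2048::real)*y5 + (53/1024::real)*y6 + (295/4096::real)*y7 + -(2743/2048::real)*y8 + -(193/2048::real)*y9 + (1793/4096::real)*y10 + (79/256::real)*y11 + -(791/2048::real)*y12 + (257/4096::real)*y13)^2 + (121/256::real)*((1::real)*y1 + (55/1024::real)*y2 + -(145/1024::real)*y3 + (9305/4096::real)*y4 + -(1495/4096::real)*y5 + (535/1024::real)*y6 + -(2885/4096::real)*y7 + -(627/1024::real)*y8 + -(2087/4096::real)*y9 + (1185/4096::real)*y10 + (61/512::real)*y11 + -(1921/4096::real)*y12 + -(337/2048::real)*y13)^2 + (215/4096::real)*((1::real)*y2 + (1293/2048::real)*y3 + (9/256::real)*y4 + -(999/2048::real)*y5 +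 -(25/512::real)*y6 + -(5547/4096::real)*y7 + (203/2048::real)*y8 + -(5081/2048::real)*y9 + -(2507/4096::real)*y10 + (29/128::real)*y11 + -(3929/2048::real)*y12 + (1211/2048::real)*y13)^2 + (1559/4096::real)*((1::real)*y3 + (71/4096::real)*y4 + (169/4096::real)*y5 + -(431/4096::real)*y6 + (179/1024::real)*y7 + -(1041/4096::real)*y8 + (4477/2048::real)*y9 + (625/4096::real)*y10 + (483/4096::real)*y11 + -(313/512::real)*y12 + (803/2048::real)*y13)^2 + (6997/4096::real)*((1::real)*y4 + (655/4096::real)*y5 + -(649/4096::real)*y6 + -(299/4096::real)*y7 + (235/2048::real)*y8 + -(605/2048::real)*y9 + (469/4096::real)*y10 + (533/4096::real)*y11 + -(437/4096::real)*y12 + -(11/512::real)*y13)^2 + (4679/4096::real)*((1::real)*y5 + (277/2048::real)*y6 + -(323/4096::real)*y7 + -(1015/2048::real)*y8 + -(401/4096::real)*y9 + -(595/1024::real)*y10 + (1/2048::real)*y11 + (173/1024::real)*y12 + -(259/4096::real)*y13)^2 + (883/4096::real)*((1::real)*y6 + -(713/2048::real)*y7 + (369/1024::real)*y8 + -(41/256::real)*y9 + (93/2048::real)*y10 + -(3727/4096::real)*y11 + -(447/1024::real)*y12 + (75/2048::real)*y13)^2 + (2535/512::real)*((1::real)*y7 + (193/2048::real)*y8 + -(363/1024::real)*y9 + (823/2048::real)*y10 + (45/4096::real)*y11 + -(337/4096::real)*y12 + (189/4096::real)*y13)^2 + (8255/4096::real)*((1::real)*y8 + -(663/4096::real)*y9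 + -(141/1024::real)*y10 + (217/1024::real)*y11 + -(847/2048::real)*y12 + -(423/4096::real)*y13)^2 + (853/1024::real)*((1::real)*y9 + (687/4096::real)*y10 + -(3/2048::real)*y11 + (1181/4096::real)*y12 + (473/4096::real)*y13)^2 + (3117/2048::real)*((1::real)*y10 + (93/1024::real)*y11 + -(463/2048::real)*y12 + (303/4096::real)*y13)^2 + (1863/4096::real)*((1::real)*y11 + -(67/4096::real)*y12 + -(487/2048::real)*y13)^2 + (2273/4096::real)*((1::real)*y12 + (911/4096::real)*y13)^2 + (93/2048::real)*((1::real)*y13)^2 + (5555743/524288000::real)*y0^2 + (20398586857/1879048192000::real)*y1^2 + (31555705939/3006477107200::real)*y2^2 + (164070818441/15032385536000::real)*y3^2 + (696193017/67108864000::real)*y4^2 + (4533209797/429496729600::real)*y5^2 + (331877017581/30064771072000::real)*y6^2 + (3180402873/343597383680::real)*y7^2 + (10040037181/1073741824000::real)*y8^2 + (640242104909/60129542144000::real)*y9^2 + (208744769/21474836480::real)*y10^2 + (85817670429/8589934592000::real)*y11^2 + (585749988031/60129542144000::real)*y12^2 + (40321625387/3758096384000::real)*y13^2 + (117/65536000::real)*(y0 - y1)^2 + (4211/104857600::real)*(y0 - y2)^2 + (13803/524288000::real)*(y0 + y3)^2 + (61/512000::real)*(y0 + y4)^2 + (86297/262144000::real)*(y0 + y5)^2 + (117/131072000::real)*(y0 - y6)^2 + (9241/524288000::real)*(y0 + y7)^2 + (2033/10485760::real)*(y0 - y8)^2 + (2047/262144000::real)*(y0 - y9)^2 + (45503/524288000::real)*(y0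 + y10)^2 + (753/32768000::real)*(y0 + y11)^2 + (5673/262144000::real)*(y0 - y12)^2 + (14271/524288000::real)*(y0 + y13)^2 + (1140491/268435456000::real)*(y1 - y2)^2 + (15631249/1879048192000::real)*(y1 + y3)^2 + (13211/52428800::real)*(y1 + y4)^2 + (3058131/134217728000::real)*(y1 - y5)^2 + (82819/93952409600::real)*(y1 - y6)^2 + (27737811/268435456000::real)*(y1 - y7)^2 + (11545181/134217728000::real)*(y1 - y8)^2 + (4381643/134217728000::real)*(y1 - y9)^2 + (56181/268435456000::real)*(y1 - y10)^2 + (155233/3355443200::real)*(y1 + y11)^2 + (317977/26843545600::real)*(y1 - y12)^2 + (5102219/268435456000::real)*(y1 + y13)^2 + (98445141/2147483648000::real)*(y2 + y3)^2 + (6364619/134217728000::real)*(y2 - y4)^2 + (146169713/1073741824000::real)*(y2 - y5)^2 + (1002463/107374182400::real)*(y2 - y6)^2 + (246189481/2147483648000::real)*(y2 - y7)^2 + (71145513/1073741824000::real)*(y2 + y8)^2 + (216128217/1073741824000::real)*(y2 - y9)^2 + (178445679/2147483648000::real)*(y2 - y10)^2 + (2147543/134217728000::real)*(y2 + y11)^2 + (1120143033/7516192768000::real)*(y2 - y12)^2 + (16676717/429496729600::real)*(y2 + y13)^2 + (13773699/268435456000::real)*(y3 + y4)^2 + (18827971/2147483648000::real)*(y3 + y5)^2 + (352407/10737418240::real)*(y3 + y6)^2 + (111386609/4294967296000::real)*(y3 - y7)^2 + (101834287/2147483648000::real)*(y3 - y8)^2 + (6832287/2147483648000::real)*(y3 -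 y9)^2 + (45434347/4294967296000::real)*(y3 + y10)^2 + (1701781/67108864000::real)*(y3 + y11)^2 + (362062371/2147483648000::real)*(y3 - y12)^2 + (521921077/7516192768000::real)*(y3 + y13)^2 + (2570248939/8589934592000::real)*(y4 + y5)^2 + (13463221/343597383680::real)*(y4 - y6)^2 + (597163839/2147483648000::real)*(y4 - y7)^2 + (569789399/1717986918400::real)*(y4 - y8)^2 + (29388319/4294967296000::real)*(y4 + y9)^2 + (124766423/1717986918400::real)*(y4 + y10)^2 + (174487287/8589934592000::real)*(y4 - y11)^2 + (251613253/1073741824000::real)*(y4 - y12)^2 + (90301687/4294967296000::real)*(y4 - y13)^2 + (93698413/2147483648000::real)*(y5 + y6)^2 + (133238891/8589934592000::real)*(y5 + y7)^2 + (5464211483/8589934592000::real)*(y5 - y8)^2 + (10701383/2147483648000::real)*(y5 - y9)^2 + (73158207/2147483648000::real)*(y5 + y10)^2 + (248925731/2147483648000::real)*(y5 + y11)^2 + (782776193/8589934592000::real)*(y5 - y12)^2 + (251366611/4294967296000::real)*(y5 - y13)^2 + (573767573/8589934592000::real)*(y6 - y7)^2 + (32364271/1717986918400::real)*(y6 - y8)^2 + (124874187/4294967296000::real)*(y6 + y9)^2 + (216645623/4294967296000::real)*(y6 - y10)^2 + (2301973/16777216000::real)*(y6 - y11)^2 + (463525677/8589934592000::real)*(y6 - y12)^2 + (18871289/536870912000::real)*(y6 + y13)^2 + (1390539079/4294967296000::real)*(y7 + y8)^2 + (656801507/1717986918400::real)*(y7 + y9)^2 + (79888471/429496729600::real)*(y7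 - y10)^2 + (852107071/1717986918400::real)*(y7 + y11)^2 + (509585313/1717986918400::real)*(y7 - y12)^2 + (1237546917/8589934592000::real)*(y7 - y13)^2 + (407206451/2147483648000::real)*(y8 - y9)^2 + (589362367/1717986918400::real)*(y8 + y10)^2 + (421441793/1717986918400::real)*(y8 - y11)^2 + (43060133/858993459200::real)*(y8 + y12)^2 + (140665887/1073741824000::real)*(y8 + y13)^2 + (931625481/4294967296000::real)*(y9 + y10)^2 + (477306607/4294967296000::real)*(y9 - y11)^2 + (539606741/1073741824000::real)*(y9 + y12)^2 + (158175487/3006477107200::real)*(y9 + y13)^2 + (2038113/6710886400::real)*(y10 + y11)^2 + (2232382933/8589934592000::real)*(y10 - y12)^2 + (19726701/1073741824000::real)*(y10 - y13)^2 + (415815061/8589934592000::real)*(y11 + y12)^2 + (262951099/4294967296000::real)*(y11 + y13)^2 + (358399199/2147483648000::real)*(y12 - y13)^2)"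
    by algebra
  moreover have "0 \<le> ((277/1024::real)*((1::real)*y0 + (53/512::real)*y1 + -(1665/4096::real)*y2 + (469/4096::real)*y3 + (3/4::real)*y4 + (5159/2048::real)*y5 + (53/1024::real)*y6 + (295/4096::real)*y7 + -(2743/2048::real)*y8 + -(193/2048::real)*y9 + (1793/4096::real)*y10 + (79/256::real)*y11 + -(791/2048::real)*y12 + (257/4096::real)*y13)^2 + (121/256::real)*((1::real)*y1 + (55/1024::real)*y2 + -(145/1024::real)*y3 + (9305/4096::real)*y4 + -(1495/4096::real)*y5 + (535/1024::real)*y6 + -(2885/4096::real)*y7 + -(627/1024::real)*y8 + -(2087/4096::real)*y9 + (1185/4096::real)*y10 + (61/512::real)*y11 + -(1921/4096::real)*y12 + -(337/2048::real)*y13)^2 + (215/4096::real)*((1::real)*y2 + (1293/2048::real)*y3 + (9/256::real)*y4 + -(999/2048::real)*y5 + -(25/512::real)*y6 + -(5547/4096::real)*y7 + (203/2048::real)*y8 + -(5081/2048::real)*y9 + -(2507/4096::real)*y10 + (29/128::real)*y11 + -(3929/2048::real)*y12 + (1211/2048::real)*y13)^2 + (1559/4096::real)*((1::real)*y3 + (71/4096::real)*y4 + (169/4096::real)*y5 + -(431/4096::real)*y6 + (179/1024::real)*y7 + -(1041/4096::real)*y8 + (4477/2048::real)*y9 + (625/4096::real)*y10 + (483/4096::real)*y11 + -(313/512::real)*y12 + (803/2048::real)*y13)^2 + (6997/4096::real)*((1::real)*y4 + (655/4096::real)*y5 + -(649/4096::real)*y6 + -(299/4096::real)*y7 + (235/2048::real)*y8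 + -(605/2048::real)*y9 + (469/4096::real)*y10 + (533/4096::real)*y11 + -(437/4096::real)*y12 + -(11/512::real)*y13)^2 + (4679/4096::real)*((1::real)*y5 + (277/2048::real)*y6 + -(323/4096::real)*y7 + -(1015/2048::real)*y8 + -(401/4096::real)*y9 + -(595/1024::real)*y10 + (1/2048::real)*y11 + (173/1024::real)*y12 + -(259/4096::real)*y13)^2 + (883/4096::real)*((1::real)*y6 + -(713/2048::real)*y7 + (369/1024::real)*y8 + -(41/256::real)*y9 + (93/2048::real)*y10 + -(3727/4096::real)*y11 + -(447/1024::real)*y12 + (75/2048::real)*y13)^2 + (2535/512::real)*((1::real)*y7 + (193/2048::real)*y8 + -(363/1024::real)*y9 + (823/2048::real)*y10 + (45/4096::real)*y11 + -(337/4096::real)*y12 + (189/4096::real)*y13)^2 + (8255/4096::real)*((1::real)*y8 + -(663/4096::real)*y9 + -(141/1024::real)*y10 + (217/1024::real)*y11 + -(847/2048::real)*y12 + -(423/4096::real)*y13)^2 + (853/1024::real)*((1::real)*y9 + (687/4096::real)*y10 + -(3/2048::real)*y11 + (1181/4096::real)*y12 + (473/4096::real)*y13)^2 + (3117/2048::real)*((1::real)*y10 + (93/1024::real)*y11 + -(463/2048::real)*y12 + (303/4096::real)*y13)^2 + (1863/4096::real)*((1::real)*y11 + -(67/4096::real)*y12 + -(487/2048::real)*y13)^2 + (2273/4096::real)*((1::real)*y12 + (911/4096::real)*y13)^2 + (93/2048::real)*((1::real)*y13)^2 + (5555743/524288000::real)*y0^2 + (20398586857/1879048192000::real)*y1^2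 + (31555705939/3006477107200::real)*y2^2 + (164070818441/15032385536000::real)*y3^2 + (696193017/67108864000::real)*y4^2 + (4533209797/429496729600::real)*y5^2 + (331877017581/30064771072000::real)*y6^2 + (3180402873/343597383680::real)*y7^2 + (10040037181/1073741824000::real)*y8^2 + (640242104909/60129542144000::real)*y9^2 + (208744769/21474836480::real)*y10^2 + (85817670429/8589934592000::real)*y11^2 + (585749988031/60129542144000::real)*y12^2 + (40321625387/3758096384000::real)*y13^2 + (117/65536000::real)*(y0 - y1)^2 + (4211/104857600::real)*(y0 - y2)^2 + (13803/524288000::real)*(y0 + y3)^2 + (61/512000::real)*(y0 + y4)^2 + (86297/262144000::real)*(y0 + y5)^2 + (117/131072000::real)*(y0 - y6)^2 + (9241/524288000::real)*(y0 + y7)^2 + (2033/10485760::real)*(y0 - y8)^2 + (2047/262144000::real)*(y0 - y9)^2 + (45503/524288000::real)*(y0 + y10)^2 + (753/32768000::real)*(y0 + y11)^2 + (5673/262144000::real)*(y0 - y12)^2 + (14271/524288000::real)*(y0 + y13)^2 + (1140491/268435456000::real)*(y1 - y2)^2 + (15631249/1879048192000::real)*(y1 + y3)^2 + (13211/52428800::real)*(y1 + y4)^2 + (3058131/134217728000::real)*(y1 - y5)^2 + (82819/93952409600::real)*(y1 - y6)^2 + (27737811/268435456000::real)*(y1 - y7)^2 + (11545181/134217728000::real)*(y1 - y8)^2 + (4381643/134217728000::real)*(y1 - y9)^2 + (56181/268435456000::real)*(y1 - y10)^2 + (155233/3355443200::real)*(y1 + y11)^2 + (317977/26843545600::real)*(y1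 - y12)^2 + (5102219/268435456000::real)*(y1 + y13)^2 + (98445141/2147483648000::real)*(y2 + y3)^2 + (6364619/134217728000::real)*(y2 - y4)^2 + (146169713/1073741824000::real)*(y2 - y5)^2 + (1002463/107374182400::real)*(y2 - y6)^2 + (246189481/2147483648000::real)*(y2 - y7)^2 + (71145513/1073741824000::real)*(y2 + y8)^2 + (216128217/1073741824000::real)*(y2 - y9)^2 + (178445679/2147483648000::real)*(y2 - y10)^2 + (2147543/134217728000::real)*(y2 + y11)^2 + (1120143033/7516192768000::real)*(y2 - y12)^2 + (16676717/429496729600::real)*(y2 + y13)^2 + (13773699/268435456000::real)*(y3 + y4)^2 + (18827971/2147483648000::real)*(y3 + y5)^2 + (352407/10737418240::real)*(y3 + y6)^2 + (111386609/4294967296000::real)*(y3 - y7)^2 + (101834287/2147483648000::real)*(y3 - y8)^2 + (6832287/2147483648000::real)*(y3 - y9)^2 + (45434347/4294967296000::real)*(y3 + y10)^2 + (1701781/67108864000::real)*(y3 + y11)^2 + (362062371/2147483648000::real)*(y3 - y12)^2 + (521921077/7516192768000::real)*(y3 + y13)^2 + (2570248939/8589934592000::real)*(y4 + y5)^2 + (13463221/343597383680::real)*(y4 - y6)^2 + (597163839/2147483648000::real)*(y4 - y7)^2 + (569789399/1717986918400::real)*(y4 - y8)^2 + (29388319/4294967296000::real)*(y4 + y9)^2 + (124766423/1717986918400::real)*(y4 + y10)^2 + (174487287/8589934592000::real)*(y4 - y11)^2 + (251613253/1073741824000::real)*(y4 - y12)^2 + (90301687/4294967296000::real)*(y4 -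 y13)^2 + (93698413/2147483648000::real)*(y5 + y6)^2 + (133238891/8589934592000::real)*(y5 + y7)^2 + (5464211483/8589934592000::real)*(y5 - y8)^2 + (10701383/2147483648000::real)*(y5 - y9)^2 + (73158207/2147483648000::real)*(y5 + y10)^2 + (248925731/2147483648000::real)*(y5 + y11)^2 + (782776193/8589934592000::real)*(y5 - y12)^2 + (251366611/4294967296000::real)*(y5 - y13)^2 + (573767573/8589934592000::real)*(y6 - y7)^2 + (32364271/1717986918400::real)*(y6 - y8)^2 + (124874187/4294967296000::real)*(y6 + y9)^2 + (216645623/4294967296000::real)*(y6 - y10)^2 + (2301973/16777216000::real)*(y6 - y11)^2 + (463525677/8589934592000::real)*(y6 - y12)^2 + (18871289/536870912000::real)*(y6 + y13)^2 + (1390539079/4294967296000::real)*(y7 + y8)^2 + (656801507/1717986918400::real)*(y7 + y9)^2 + (79888471/429496729600::real)*(y7 - y10)^2 + (852107071/1717986918400::real)*(y7 + y11)^2 + (509585313/1717986918400::real)*(y7 - y12)^2 + (1237546917/8589934592000::real)*(y7 - y13)^2 + (407206451/2147483648000::real)*(y8 - y9)^2 + (589362367/1717986918400::real)*(y8 + y10)^2 + (421441793/1717986918400::real)*(y8 - y11)^2 + (43060133/858993459200::real)*(y8 + y12)^2 + (140665887/1073741824000::real)*(y8 + y13)^2 + (931625481/4294967296000::real)*(y9 + y10)^2 + (477306607/4294967296000::real)*(y9 - y11)^2 + (539606741/1073741824000::real)*(y9 + y12)^2 + (158175487/3006477107200::real)*(y9 + y13)^2 + (2038113/6710886400::real)*(y10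 + y11)^2 + (2232382933/8589934592000::real)*(y10 - y12)^2 + (19726701/1073741824000::real)*(y10 - y13)^2 + (415815061/8589934592000::real)*(y11 + y12)^2 + (262951099/4294967296000::real)*(y11 + y13)^2 + (358399199/2147483648000::real)*(y12 - y13)^2)"
    by (intro add_nonneg_nonneg mult_nonneg_nonneg zero_le_power2) simp_all
  ultimately show ?thesis by simp
qed

lemma sosB1: fixes y0 y1 y2 y3 y4 :: real
  shows "0 \<le> ((89/3500::real)*(y0)*(y0) + -(1/125::real)*(y0)*(y1) + -(3/250::real)*(y0)*(y2) + -(3/50::real)*(y0)*(y3) + -(3/125::real)*(y0)*(y4) + (8/25::real)*(y1)*(y1) + (43/250::real)*(y1)*(y2) + -(28/125::real)*(y1)*(y3) + -(3/250::real)*(y1)*(y4) + (13/125::real)*(y2)*(y2) + (2/125::real)*(y2)*(y3) + -(1/500::real)*(y2)*(y4) + (43/125::real)*(y3)*(y3) + (117/500::real)*(y3)*(y4) + (79/1000::real)*(y4)*(y4))"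
proof -
  have "((89/3500::real)*(y0)*(y0) + -(1/125::real)*(y0)*(y1) + -(3/250::real)*(y0)*(y2) + -(3/50::real)*(y0)*(y3) + -(3/125::real)*(y0)*(y4) + (8/25::real)*(y1)*(y1) + (43/250::real)*(y1)*(y2) + -(28/125::real)*(y1)*(y3) + -(3/250::real)*(y1)*(y4) + (13/125::real)*(y2)*(y2) + (2/125::real)*(y2)*(y3) + -(1/500::real)*(y2)*(y4) + (43/125::real)*(y3)*(y3) + (117/500::real)*(y3)*(y4) + (79/1000::real)*(y4)*(y4)) = ((59/4096::real)*((1::real)*y0 + -(1125/4096::real)*y1 + -(211/512::real)*y2 + -(8439/4096::real)*y3 + -(3375/4096::real)*y4)^2 + (1261/4096::real)*((1::real)*y1 + (561/2048::real)*y2 + -(1599/4096::real)*y3 + -(31/1024::real)*y4)^2 + (69/1024::real)*((1::real)*y2 + (433/1024::real)*y3 + -(103/2048::real)*y4)^2 + (869/4096::real)*((1::real)*y3 + (869/2048::real)*y4)^2 + (5/256::real)*((1::real)*y4)^2 + (153592603/14680064000::real)*y0^2 + (93438155891/8589934592000::real)*y1^2 + (9207855371/858993459200::real)*y2^2 + (46644011221/4294967296000::real)*y3^2 + (90001070669/8589934592000::real)*y4^2 + (91733/2097152000::real)*(y0 - y1)^2 + (16739/262144000::real)*(y0 - y2)^2 + (135387/419430400::real)*(y0 - y3)^2 + (275199/2097152000::real)*(y0 - y4)^2 + (41268239/1073741824000::real)*(y1 + y2)^2 + (275565571/8589934592000::real)*(y1 + y3)^2 + (516807323/8589934592000::real)*(y1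 + y4)^2 + (850763243/4294967296000::real)*(y2 + y3)^2 + (13594169/268435456000::real)*(y2 + y4)^2 + (2741568389/8589934592000::real)*(y3 + y4)^2)"
    by algebra
  moreover have "0 \<le> ((59/4096::real)*((1::real)*y0 + -(1125/4096::real)*y1 + -(211/512::real)*y2 + -(8439/4096::real)*y3 + -(3375/4096::real)*y4)^2 + (1261/4096::real)*((1::real)*y1 + (561/2048::real)*y2 + -(1599/4096::real)*y3 + -(31/1024::real)*y4)^2 + (69/1024::real)*((1::real)*y2 + (433/1024::real)*y3 + -(103/2048::real)*y4)^2 + (869/4096::real)*((1::real)*y3 + (869/2048::real)*y4)^2 + (5/256::real)*((1::real)*y4)^2 + (153592603/14680064000::real)*y0^2 + (93438155891/8589934592000::real)*y1^2 + (9207855371/858993459200::real)*y2^2 + (46644011221/4294967296000::real)*y3^2 + (90001070669/8589934592000::real)*y4^2 + (91733/2097152000::real)*(y0 - y1)^2 + (16739/262144000::real)*(y0 - y2)^2 + (135387/419430400::real)*(y0 - y3)^2 + (275199/2097152000::real)*(y0 - y4)^2 + (41268239/1073741824000::real)*(y1 + y2)^2 + (275565571/8589934592000::real)*(y1 + y3)^2 + (516807323/8589934592000::real)*(y1 + y4)^2 + (850763243/4294967296000::real)*(y2 + y3)^2 + (13594169/268435456000::real)*(y2 + y4)^2 + (2741568389/8589934592000::real)*(y3 + y4)^2)"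
    by (intro add_nonneg_nonneg mult_nonneg_nonneg zero_le_power2) simp_all
  ultimately show ?thesis by simp
qed

lemma sosB2: fixes y0 y1 y2 y3 :: real
  shows "0 \<le> ((109/1000::real)*(y0)*(y0) + (19/500::real)*(y0)*(y1) + -(21/250::real)*(y0)*(y2) + -(1/100::real)*(y0)*(y3) + (41/200::real)*(y1)*(y1) + (7/250::real)*(y1)*(y2) + (1/500::real)*(y1)*(y3) + (23/200::real)*(y2)*(y2) + (129/500::real)*(y2)*(y3) + (257/1000::real)*(y3)*(y3))"
proof -
  have "((109/1000::real)*(y0)*(y0) + (19/500::real)*(y0)*(y1) + -(21/250::real)*(y0)*(y2) + -(1/100::real)*(y0)*(y3) + (41/200::real)*(y1)*(y1) + (7/250::real)*(y1)*(y2) + (1/500::real)*(y1)*(y3) + (23/200::real)*(y2)*(y2) + (129/500::real)*(y2)*(y3) + (257/1000::real)*(y3)*(y3)) = ((399/4096::real)*((1::real)*y0 + (799/4096::real)*y1 + -(883/2048::real)*y2 + -(105/2048::real)*y3)^2 + (777/4096::real)*((1::real)*y1 + (479/4096::real)*y2 + (43/4096::real)*y3)^2 + (169/2048::real)*((1::real)*y2 + (1567/1024::real)*y3)^2 + (105/2048::real)*((1::real)*y3)^2 + (24284187/2097152000::real)*y0^2 + (99367202537/8589934592000::real)*y1^2 + (9820190731/858993459200::real)*y2^2 + (50917521079/4294967296000::real)*y3^2 + (4237/2097152000::real)*(y0 - y1)^2 + (567/1048576000::real)*(y0 - y2)^2 + (1201/209715200::real)*(y0 - y3)^2 + (38354519/4294967296000::real)*(y1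 + y2)^2 + (73985579/4294967296000::real)*(y1 - y3)^2 + (2889428243/8589934592000::real)*(y2 + y3)^2)"
    by algebra
  moreover have "0 \<le> ((399/4096::real)*((1::real)*y0 + (799/4096::real)*y1 + -(883/2048::real)*y2 + -(105/2048::real)*y3)^2 + (777/4096::real)*((1::real)*y1 + (479/4096::real)*y2 + (43/4096::real)*y3)^2 + (169/2048::real)*((1::real)*y2 + (1567/1024::real)*y3)^2 + (105/2048::real)*((1::real)*y3)^2 + (24284187/2097152000::real)*y0^2 + (99367202537/8589934592000::real)*y1^2 + (9820190731/858993459200::real)*y2^2 + (50917521079/4294967296000::real)*y3^2 + (4237/2097152000::real)*(y0 - y1)^2 + (567/1048576000::real)*(y0 - y2)^2 + (1201/209715200::real)*(y0 - y3)^2 + (38354519/4294967296000::real)*(y1 + y2)^2 + (73985579/4294967296000::real)*(y1 - y3)^2 + (2889428243/8589934592000::real)*(y2 + y3)^2)"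
    by (intro add_nonneg_nonneg mult_nonneg_nonneg zero_le_power2) simp_all
  ultimately show ?thesis by simp
qed

lemma claimB: fixes c1 t1 c2 t2 :: real
  assumes e1: "c1^2 + 7*t1^2 = 1" and e2: "c2^2 + 7*t2^2 = 1"
    and H: "0 \<le> 1 - 3*c1 + c2 + c1*c2 + 7*t1*t2 + 7*(t1 + t2 + t1*c2 - c1*t2)" and G: "0 \<le> 2*c1 + 2*c2 + c1*c2 + 7*t1*t2 - 3"
  shows "0 \<le> t1"
proof -
  have i0: "0 \<le> ((141/500::real)*(t2)*(t2) + (7/125::real)*(t2)*((c2 - 1)) + -(11/50::real)*(t2)*(t1) + (31/500::real)*(t2)*((c1 - 1)) + (203/500::real)*(t2)*(t2^2) + (2727/2000::real)*(t2)*((c2 - 1)*t2) + (7/250::real)*(t2)*((c2 - 1)^2) + (39/1000::real)*(t2)*(t1*t2) + -(29/40::real)*(t2)*(t1*(c2 - 1)) + -(51/1000::real)*(t2)*(t1^2) + (237/1000::real)*(t2)*((c1 - 1)*t2) + (167/1000::real)*(t2)*((c1 - 1)*(c2 - 1)) + -(209/1000::real)*(t2)*((c1 - 1)*t1) + (17/500::real)*(t2)*((c1 - 1)^2) + (487/1000::real)*((c2 - 1))*((c2 - 1)) + (7/250::real)*((c2 - 1))*(t1) + -(223/1750::real)*((c2 - 1))*((c1 - 1)) + (219/100::real)*((c2 - 1))*(t2^2) + -(51/250::real)*((c2 - 1))*((c2 - 1)*t2) + (1391/2800::real)*((c2 - 1))*((c2 - 1)^2) + -(331/500::real)*((c2 -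 1))*(t1*t2) + -(327/500::real)*((c2 - 1))*(t1*(c2 - 1)) + -(487/1000::real)*((c2 - 1))*(t1^2) + (149/500::real)*((c2 - 1))*((c1 - 1)*t2) + (13/100::real)*((c2 - 1))*((c1 - 1)*(c2 - 1)) + -(93/200::real)*((c2 - 1))*((c1 - 1)*t1) + -(19/125::real)*((c2 - 1))*((c1 - 1)^2) + (11/100::real)*(t1)*(t1) + (17/500::real)*(t1)*((c1 - 1)) + -(23/500::real)*(t1)*(t2^2) + -(78/125::real)*(t1)*((c2 - 1)*t2) + (1/100::real)*(t1)*((c2 - 1)^2) + -(97/500::real)*(t1)*(t1*t2) + (137/500::real)*(t1)*(t1*(c2 - 1)) + -(133/500::real)*(t1)*(t1^2) + -(73/500::real)*(t1)*((c1 - 1)*t2) + -(19/500::real)*(t1)*((c1 - 1)*(c2 - 1)) + -(123/875::real)*(t1)*((c1 - 1)*t1) + (1/25::real)*(t1)*((c1 - 1)^2) + (213/500::real)*((c1 - 1))*((c1 - 1)) + -(121/500::real)*((c1 - 1))*(t2^2) + (51/250::real)*((c1 - 1))*((c2 - 1)*t2) + -(3/20::real)*((c1 - 1))*((c2 - 1)^2) + (71/500::real)*((c1 - 1))*(t1*t2) + -(47/250::real)*((c1 - 1))*(t1*(c2 - 1)) + (781/500::real)*((c1 - 1))*(t1^2) + (8/125::real)*((c1 - 1))*((c1 - 1)*t2) + (27/250::real)*((c1 - 1))*((c1 - 1)*(c2 - 1)) + -(277/500::real)*((c1 - 1))*((c1 - 1)*t1) + (1273/3500::real)*((c1 - 1))*((c1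 - 1)^2) + (539/125::real)*(t2^2)*(t2^2) + (98/125::real)*(t2^2)*((c2 - 1)*t2) + (3/5::real)*(t2^2)*((c2 - 1)^2) + -(217/125::real)*(t2^2)*(t1*t2) + -(147/100::real)*(t2^2)*(t1*(c2 - 1)) + -(1061/500::real)*(t2^2)*(t1^2) + (119/100::real)*(t2^2)*((c1 - 1)*t2) + (207/250::real)*(t2^2)*((c1 - 1)*(c2 - 1)) + -(193/125::real)*(t2^2)*((c1 - 1)*t1) + -(197/500::real)*(t2^2)*((c1 - 1)^2) + (2991/1000::real)*((c2 - 1)*t2)*((c2 - 1)*t2) + (14/125::real)*((c2 - 1)*t2)*((c2 - 1)^2) + (49/250::real)*((c2 - 1)*t2)*(t1*t2) + -(1349/500::real)*((c2 - 1)*t2)*(t1*(c2 - 1)) + -(71/500::real)*((c2 - 1)*t2)*(t1^2) + -(183/250::real)*((c2 - 1)*t2)*((c1 - 1)*t2) + (111/250::real)*((c2 - 1)*t2)*((c1 - 1)*(c2 - 1)) + (21/500::real)*((c2 - 1)*t2)*((c1 - 1)*t1) + -(4/125::real)*((c2 - 1)*t2)*((c1 - 1)^2) + (17/40::real)*((c2 - 1)^2)*((c2 - 1)^2) + -(61/125::real)*((c2 - 1)^2)*(t1*t2) + -(19/50::real)*((c2 - 1)^2)*(t1*(c2 - 1)) + -(89/250::real)*((c2 - 1)^2)*(t1^2) + -(19/250::real)*((c2 - 1)^2)*((c1 - 1)*t2) + -(203/500::real)*((c2 - 1)^2)*((c1 - 1)*(c2 - 1)) + -(131/500::real)*((c2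 - 1)^2)*((c1 - 1)*t1) + -(53/500::real)*((c2 - 1)^2)*((c1 - 1)^2) + (5349/1000::real)*(t1*t2)*(t1*t2) + (156/125::real)*(t1*t2)*(t1*(c2 - 1)) + -(483/200::real)*(t1*t2)*(t1^2) + (199/50::real)*(t1*t2)*((c1 - 1)*t2) + (13/100::real)*(t1*t2)*((c1 - 1)*(c2 - 1)) + -(53/200::real)*(t1*t2)*((c1 - 1)*t1) + (137/250::real)*(t1*t2)*((c1 - 1)^2) + (309/100::real)*(t1*(c2 - 1))*(t1*(c2 - 1)) + -(1099/1000::real)*(t1*(c2 - 1))*(t1^2) + (1/100::real)*(t1*(c2 - 1))*((c1 - 1)*t2) + (23/50::real)*(t1*(c2 - 1))*((c1 - 1)*(c2 - 1)) + -(279/200::real)*(t1*(c2 - 1))*((c1 - 1)*t1) + -(81/250::real)*(t1*(c2 - 1))*((c1 - 1)^2) + (3953/1000::real)*(t1^2)*(t1^2) + -(389/500::real)*(t1^2)*((c1 - 1)*t2) + -(23/125::real)*(t1^2)*((c1 - 1)*(c2 - 1)) + (217/250::real)*(t1^2)*((c1 - 1)*t1) + (247/350::real)*(t1^2)*((c1 - 1)^2) + (2923/1000::real)*((c1 - 1)*t2)*((c1 - 1)*t2) + (17/50::real)*((c1 - 1)*t2)*((c1 - 1)*(c2 - 1)) + -(287/250::real)*((c1 - 1)*t2)*((c1 - 1)*t1) + (69/125::real)*((c1 - 1)*t2)*((c1 - 1)^2) + (409/500::real)*((c1 - 1)*(c2 - 1))*((c1 - 1)*(c2 - 1)) + -(267/500::real)*((c1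 - 1)*(c2 - 1))*((c1 - 1)*t1) + -(131/500::real)*((c1 - 1)*(c2 - 1))*((c1 - 1)^2) + (333/200::real)*((c1 - 1)*t1)*((c1 - 1)*t1) + (31/250::real)*((c1 - 1)*t1)*((c1 - 1)^2) + (129/500::real)*((c1 - 1)^2)*((c1 - 1)^2))"
    by (rule sosB0[of "t2" "(c2 - 1)" "t1" "(c1 - 1)" "t2^2" "(c2 - 1)*t2" "(c2 - 1)^2" "t1*t2" "t1*(c2 - 1)" "t1^2" "(c1 - 1)*t2" "(c1 - 1)*(c2 - 1)" "(c1 - 1)*t1" "(c1 - 1)^2"])
  have i1: "0 \<le> ((89/3500::real)*(1)*(1) + -(1/125::real)*(1)*(t2) + -(3/250::real)*(1)*((c2 - 1)) + -(3/50::real)*(1)*(t1) + -(3/125::real)*(1)*((c1 - 1)) + (8/25::real)*(t2)*(t2) + (43/250::real)*(t2)*((c2 - 1)) + -(28/125::real)*(t2)*(t1) + -(3/250::real)*(t2)*((c1 - 1)) + (13/125::real)*((c2 - 1))*((c2 - 1)) + (2/125::real)*((c2 - 1))*(t1) + -(1/500::real)*((c2 - 1))*((c1 - 1)) + (43/125::real)*(t1)*(t1) + (117/500::real)*(t1)*((c1 - 1)) + (79/1000::real)*((c1 - 1))*((c1 - 1)))"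
    by (rule sosB1[of "1" "t2" "(c2 - 1)" "t1" "(c1 - 1)"])
  have i2: "0 \<le> ((109/1000::real)*(t2)*(t2) + (19/500::real)*(t2)*((c2 - 1)) + -(21/250::real)*(t2)*(t1) + -(1/100::real)*(t2)*((c1 - 1)) + (41/200::real)*((c2 - 1))*((c2 - 1)) + (7/250::real)*((c2 - 1))*(t1) + (1/500::real)*((c2 - 1))*((c1 - 1)) + (23/200::real)*(t1)*(t1) + (129/500::real)*(t1)*((c1 - 1)) + (257/1000::real)*((c1 - 1))*((c1 - 1)))"
    by (rule sosB2[of "t2" "(c2 - 1)" "t1" "(c1 - 1)"])
  have id: "t1 = ((141/500::real)*(t2)*(t2) + (7/125::real)*(t2)*((c2 - 1)) + -(11/50::real)*(t2)*(t1) + (31/500::real)*(t2)*((c1 - 1)) + (203/500::real)*(t2)*(t2^2) + (2727/2000::real)*(t2)*((c2 - 1)*t2) + (7/250::real)*(t2)*((c2 - 1)^2) + (39/1000::real)*(t2)*(t1*t2) + -(29/40::real)*(t2)*(t1*(c2 - 1)) + -(51/1000::real)*(t2)*(t1^2) + (237/1000::real)*(t2)*((c1 - 1)*t2) + (167/1000::real)*(t2)*((c1 - 1)*(c2 - 1)) + -(209/1000::real)*(t2)*((c1 - 1)*t1) + (17/500::real)*(t2)*((c1 - 1)^2) + (487/1000::real)*((c2 - 1))*((c2 - 1)) + (7/250::real)*((c2 - 1))*(t1) + -(223/1750::real)*((c2 - 1))*((c1 - 1)) + (219/100::real)*((c2 - 1))*(t2^2) + -(51/250::real)*((c2 - 1))*((c2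 - 1)*t2) + (1391/2800::real)*((c2 - 1))*((c2 - 1)^2) + -(331/500::real)*((c2 - 1))*(t1*t2) + -(327/500::real)*((c2 - 1))*(t1*(c2 - 1)) + -(487/1000::real)*((c2 - 1))*(t1^2) + (149/500::real)*((c2 - 1))*((c1 - 1)*t2) + (13/100::real)*((c2 - 1))*((c1 - 1)*(c2 - 1)) + -(93/200::real)*((c2 - 1))*((c1 - 1)*t1) + -(19/125::real)*((c2 - 1))*((c1 - 1)^2) + (11/100::real)*(t1)*(t1) + (17/500::real)*(t1)*((c1 - 1)) + -(23/500::real)*(t1)*(t2^2) + -(78/125::real)*(t1)*((c2 - 1)*t2) + (1/100::real)*(t1)*((c2 - 1)^2) + -(97/500::real)*(t1)*(t1*t2) + (137/500::real)*(t1)*(t1*(c2 - 1)) + -(133/500::real)*(t1)*(t1^2) + -(73/500::real)*(t1)*((c1 - 1)*t2) + -(19/500::real)*(t1)*((c1 - 1)*(c2 - 1)) + -(123/875::real)*(t1)*((c1 - 1)*t1) + (1/25::real)*(t1)*((c1 - 1)^2) + (213/500::real)*((c1 - 1))*((c1 - 1)) + -(121/500::real)*((c1 - 1))*(t2^2) + (51/250::real)*((c1 - 1))*((c2 - 1)*t2) + -(3/20::real)*((c1 - 1))*((c2 - 1)^2) + (71/500::real)*((c1 - 1))*(t1*t2) + -(47/250::real)*((c1 - 1))*(t1*(c2 - 1)) + (781/500::real)*((c1 - 1))*(t1^2) + (8/125::real)*((c1 - 1))*((c1 - 1)*t2) + (27/250::real)*((c1 - 1))*((c1 - 1)*(c2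 - 1)) + -(277/500::real)*((c1 - 1))*((c1 - 1)*t1) + (1273/3500::real)*((c1 - 1))*((c1 - 1)^2) + (539/125::real)*(t2^2)*(t2^2) + (98/125::real)*(t2^2)*((c2 - 1)*t2) + (3/5::real)*(t2^2)*((c2 - 1)^2) + -(217/125::real)*(t2^2)*(t1*t2) + -(147/100::real)*(t2^2)*(t1*(c2 - 1)) + -(1061/500::real)*(t2^2)*(t1^2) + (119/100::real)*(t2^2)*((c1 - 1)*t2) + (207/250::real)*(t2^2)*((c1 - 1)*(c2 - 1)) + -(193/125::real)*(t2^2)*((c1 - 1)*t1) + -(197/500::real)*(t2^2)*((c1 - 1)^2) + (2991/1000::real)*((c2 - 1)*t2)*((c2 - 1)*t2) + (14/125::real)*((c2 - 1)*t2)*((c2 - 1)^2) + (49/250::real)*((c2 - 1)*t2)*(t1*t2) + -(1349/500::real)*((c2 - 1)*t2)*(t1*(c2 - 1)) + -(71/500::real)*((c2 - 1)*t2)*(t1^2) + -(183/250::real)*((c2 - 1)*t2)*((c1 - 1)*t2) + (111/250::real)*((c2 - 1)*t2)*((c1 - 1)*(c2 - 1)) + (21/500::real)*((c2 - 1)*t2)*((c1 - 1)*t1) + -(4/125::real)*((c2 - 1)*t2)*((c1 - 1)^2) + (17/40::real)*((c2 - 1)^2)*((c2 - 1)^2) + -(61/125::real)*((c2 - 1)^2)*(t1*t2) + -(19/50::real)*((c2 - 1)^2)*(t1*(c2 - 1)) + -(89/250::real)*((c2 - 1)^2)*(t1^2) + -(19/250::real)*((c2 - 1)^2)*((c1 -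 1)*t2) + -(203/500::real)*((c2 - 1)^2)*((c1 - 1)*(c2 - 1)) + -(131/500::real)*((c2 - 1)^2)*((c1 - 1)*t1) + -(53/500::real)*((c2 - 1)^2)*((c1 - 1)^2) + (5349/1000::real)*(t1*t2)*(t1*t2) + (156/125::real)*(t1*t2)*(t1*(c2 - 1)) + -(483/200::real)*(t1*t2)*(t1^2) + (199/50::real)*(t1*t2)*((c1 - 1)*t2) + (13/100::real)*(t1*t2)*((c1 - 1)*(c2 - 1)) + -(53/200::real)*(t1*t2)*((c1 - 1)*t1) + (137/250::real)*(t1*t2)*((c1 - 1)^2) + (309/100::real)*(t1*(c2 - 1))*(t1*(c2 - 1)) + -(1099/1000::real)*(t1*(c2 - 1))*(t1^2) + (1/100::real)*(t1*(c2 - 1))*((c1 - 1)*t2) + (23/50::real)*(t1*(c2 - 1))*((c1 - 1)*(c2 - 1)) + -(279/200::real)*(t1*(c2 - 1))*((c1 - 1)*t1) + -(81/250::real)*(t1*(c2 - 1))*((c1 - 1)^2) + (3953/1000::real)*(t1^2)*(t1^2) + -(389/500::real)*(t1^2)*((c1 - 1)*t2) + -(23/125::real)*(t1^2)*((c1 - 1)*(c2 - 1)) + (217/250::real)*(t1^2)*((c1 - 1)*t1) + (247/350::real)*(t1^2)*((c1 - 1)^2) + (2923/1000::real)*((c1 - 1)*t2)*((c1 - 1)*t2) + (17/50::real)*((c1 - 1)*t2)*((c1 - 1)*(c2 - 1)) + -(287/250::real)*((c1 - 1)*t2)*((c1 - 1)*t1) + (69/125::real)*((c1 - 1)*t2)*((c1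 - 1)^2) + (409/500::real)*((c1 - 1)*(c2 - 1))*((c1 - 1)*(c2 - 1)) + -(267/500::real)*((c1 - 1)*(c2 - 1))*((c1 - 1)*t1) + -(131/500::real)*((c1 - 1)*(c2 - 1))*((c1 - 1)^2) + (333/200::real)*((c1 - 1)*t1)*((c1 - 1)*t1) + (31/250::real)*((c1 - 1)*t1)*((c1 - 1)^2) + (129/500::real)*((c1 - 1)^2)*((c1 - 1)^2)) + ((89/3500::real)*(1)*(1) + -(1/125::real)*(1)*(t2) + -(3/250::real)*(1)*((c2 - 1)) + -(3/50::real)*(1)*(t1) + -(3/125::real)*(1)*((c1 - 1)) + (8/25::real)*(t2)*(t2) + (43/250::real)*(t2)*((c2 - 1)) + -(28/125::real)*(t2)*(t1) + -(3/250::real)*(t2)*((c1 - 1)) + (13/125::real)*((c2 - 1))*((c2 - 1)) + (2/125::real)*((c2 - 1))*(t1) + -(1/500::real)*((c2 - 1))*((c1 - 1)) + (43/125::real)*(t1)*(t1) + (117/500::real)*(t1)*((c1 - 1)) + (79/1000::real)*((c1 - 1))*((c1 - 1))) * (1 - 3*c1 + c2 + c1*c2 + 7*t1*t2 + 7*(t1 + t2 + t1*c2 - c1*t2)) + ((109/1000::real)*(t2)*(t2) + (19/500::real)*(t2)*((c2 - 1)) + -(21/250::real)*(t2)*(t1) + -(1/100::real)*(t2)*((c1 - 1)) + (41/200::real)*((c2 - 1))*((c2 - 1)) + (7/250::real)*((c2 - 1))*(t1) + (1/500::real)*((c2 - 1))*((c1 - 1)) + (23/200::real)*(t1)*(t1)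 + (129/500::real)*(t1)*((c1 - 1)) + (257/1000::real)*((c1 - 1))*((c1 - 1))) * (2*c1 + 2*c2 + c1*c2 + 7*t1*t2 - 3) + (23/1000::real) * (1 - 3*c1 + c2 + c1*c2 + 7*t1*t2 + 7*(t1 + t2 + t1*c2 - c1*t2)) * (2*c1 + 2*c2 + c1*c2 + 7*t1*t2 - 3) + ((1/14::real)*1 + (221/1000::real)*t2 + -(19/500::real)*(c2 - 1) + -(13/20::real)*t1 + -(129/280::real)*(c1 - 1) + -(27/200::real)*t2^2 + -(139/1000::real)*(c2 - 1)*t2 + -(381/1000::real)*(c2 - 1)^2 + -(57/500::real)*t1*t2 + -(187/1000::real)*t1*(c2 - 1) + -(3953/7000::real)*t1^2 + (1/1000::real)*(c1 - 1)*t2 + -(37/500::real)*(c1 - 1)*(c2 - 1) + -(31/250::real)*(c1 - 1)*t1 + -(129/500::real)*(c1 - 1)^2) * (c1^2 + 7*t1^2 - 1) + (-(1/14::real)*1 + -(29/500::real)*t2 + -(6577/14000::real)*(c2 - 1) + -(631/1000::real)*t1 + (19/250::real)*(c1 - 1) + -(77/125::real)*t2^2 + -(14/125::real)*(c2 - 1)*t2 + -(17/40::real)*(c2 - 1)^2 + -(181/1000::real)*t1*t2 + -(87/250::real)*t1*(c2 - 1) + -(179/1000::real)*t1^2 + (3/20::real)*(c1 - 1)*t2 + (97/1000::real)*(c1 - 1)*(c2 - 1) + -(389/1000::real)*(c1 - 1)*t1 + -(177/500::real)*(c1 - 1)^2) * (c2^2 + 7*t2^2 - 1)"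
    by algebra
  have j1: "0 \<le> ((89/3500::real)*(1)*(1) + -(1/125::real)*(1)*(t2) + -(3/250::real)*(1)*((c2 - 1)) + -(3/50::real)*(1)*(t1) + -(3/125::real)*(1)*((c1 - 1)) + (8/25::real)*(t2)*(t2) + (43/250::real)*(t2)*((c2 - 1)) + -(28/125::real)*(t2)*(t1) + -(3/250::real)*(t2)*((c1 - 1)) + (13/125::real)*((c2 - 1))*((c2 - 1)) + (2/125::real)*((c2 - 1))*(t1) + -(1/500::real)*((c2 - 1))*((c1 - 1)) + (43/125::real)*(t1)*(t1) + (117/500::real)*(t1)*((c1 - 1)) + (79/1000::real)*((c1 - 1))*((c1 - 1))) * (1 - 3*c1 + c2 + c1*c2 + 7*t1*t2 + 7*(t1 + t2 + t1*c2 - c1*t2))" using i1 H by (rule mult_nonneg_nonneg)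
  have j2: "0 \<le> ((109/1000::real)*(t2)*(t2) + (19/500::real)*(t2)*((c2 - 1)) + -(21/250::real)*(t2)*(t1) + -(1/100::real)*(t2)*((c1 - 1)) + (41/200::real)*((c2 - 1))*((c2 - 1)) + (7/250::real)*((c2 - 1))*(t1) + (1/500::real)*((c2 - 1))*((c1 - 1)) + (23/200::real)*(t1)*(t1) + (129/500::real)*(t1)*((c1 - 1)) + (257/1000::real)*((c1 - 1))*((c1 - 1))) * (2*c1 + 2*c2 + c1*c2 + 7*t1*t2 - 3)" using i2 G by (rule mult_nonneg_nonneg)
  have j3: "0 \<le> (23/1000::real) * (1 - 3*c1 + c2 + c1*c2 + 7*t1*t2 + 7*(t1 + t2 + t1*c2 - c1*t2)) * (2*c1 + 2*c2 + c1*c2 + 7*t1*t2 - 3)" by (intro mult_nonneg_nonneg H G) simp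
  have j4: "((1/14::real)*1 + (221/1000::real)*t2 + -(19/500::real)*(c2 - 1) + -(13/20::real)*t1 + -(129/280::real)*(c1 - 1) + -(27/200::real)*t2^2 + -(139/1000::real)*(c2 - 1)*t2 + -(381/1000::real)*(c2 - 1)^2 + -(57/500::real)*t1*t2 + -(187/1000::real)*t1*(c2 - 1) + -(3953/7000::real)*t1^2 + (1/1000::real)*(c1 - 1)*t2 + -(37/500::real)*(c1 - 1)*(c2 - 1) + -(31/250::real)*(c1 - 1)*t1 + -(129/500::real)*(c1 - 1)^2) * (c1^2 + 7*t1^2 - 1) = 0" using e1 by simp
  have j5: "(-(1/14::real)*1 + -(29/500::real)*t2 + -(6577/14000::real)*(c2 - 1) + -(631/1000::real)*t1 + (19/250::real)*(c1 - 1) + -(77/125::real)*t2^2 + -(14/125::real)*(c2 - 1)*t2 + -(17/40::real)*(c2 - 1)^2 + -(181/1000::real)*t1*t2 + -(87/250::real)*t1*(c2 - 1) + -(179/1000::real)*t1^2 + (3/20::real)*(c1 - 1)*t2 + (97/1000::real)*(c1 - 1)*(c2 - 1) + -(389/1000::real)*(c1 - 1)*t1 + -(177/500::real)*(c1 - 1)^2) * (c2^2 + 7*t2^2 - 1) = 0" using e2 by simp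
  show ?thesis using combB[OF id i0 j1 j2 j3 j4 j5] .
qed


lemma unique_norm:
  fixes z1 z2 :: complex
  assumes F1: "f 1 (vector [z1, z2, 1]) = 0" and F2: "f 2 (vector [z1, z2, 1]) = 0"
    and F0: "f 0 (vector [z1, z2, 1]) \<le> 0" and F3: "f 3 (vector [z1, z2, 1]) \<le> 0"
    and F10: "f 10 (vector [z1, z2, 1]) \<le> 0"
  shows "z1 = -1 \<and> z2 = (2 + w) / 2"
proof -
  obtain x1 y1 where z1: "z1 = Complex x1 y1" by (cases z1)
  obtain x2 y2 where z2: "z2 = Complex x2 y2" by (cases z2)
  define u1 where "u1 = y1 / r7"
  define u2 where "u2 = y2 / r7"
  have y1: "y1 = r7 * u1" and y2: "y2 = r7 * u2" using r7pos by (simp_all add: u1_def u2_def)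
  define c1 where "c1 = - x1"
  define t1 where "t1 = - u1"
  define c2 where "c2 = - x1 - 3*x2/2 - 7*u2/2 + 2"
  define t2 where "t2 = - u1 - 3*u2/2 + x2/2"
  have a2: "f 2 (vector [z1, z2, 1]) = 1 - (c1^2 + 7*t1^2)"
    unfolding f_V cmod_power2 z1 z2 y1 y2 c1_def t1_def
    by (simp add: cmod_power2 power2_eq_square algebra_simps r7sq r7sq')
  have a1: "f 1 (vector [z1, z2, 1]) = 1 - (c2^2 + 7*t2^2)"
    unfolding f_V cmod_power2 z1 z2 y1 y2 c2_def t2_def
    by (simp add: cmod_power2 w_Re w_Im power2_eq_square algebra_simps r7sq r7sq')
  have a0: "f 0 (vector [z1, z2, 1]) = -1/2*(2*c1 + 2*c2 + c1*c2 + 7*t1*t2 - 3) + 1/4*(c1^2 + 7*t1^2 - 1) + 1/4*(c2^2 + 7*t2^2 - 1)"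
    unfolding f_V cmod_power2 z1 z2 y1 y2 c1_def t1_def c2_def t2_def
    by (simp add: cmod_power2 w_Re w_Im power2_eq_square algebra_simps r7sq r7sq')
  have a3: "f 3 (vector [z1, z2, 1]) = -1/4*(3 - 5*c1 - c2 + 3*c1*c2 + 21*t1*t2 - 7*(t1 + t2 + t1*c2 - c1*t2)) - (c1^2 + 7*t1^2 - 1) - 1/4*(c2^2 + 7*t2^2 - 1)"
    unfolding f_V cmod_power2 z1 z2 y1 y2 c1_def t1_def c2_def t2_def
    by (simp add: cmod_power2 w_Re w_Im power2_eq_square algebra_simps r7sq r7sq')
  have a10: "f 10 (vector [z1, z2, 1]) = -1/4*(1 - 3*c1 + c2 + c1*c2 + 7*t1*t2 + 7*(t1 + t2 + t1*c2 - c1*t2)) - 1/2*(c1^2 + 7*t1^2 - 1) - 1/4*(c2^2 + 7*t2^2 - 1)"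
    unfolding f_V cmod_power2 z1 z2 y1 y2 c1_def t1_def c2_def t2_def
    by (simp add: cmod_power2 w_Re w_Im power2_eq_square algebra_simps r7sq r7sq')
  have e1: "c1^2 + 7*t1^2 = 1" using F2 a2 by simp
  have e2: "c2^2 + 7*t2^2 = 1" using F1 a1 by simp
  have G: "0 \<le> 2*c1 + 2*c2 + c1*c2 + 7*t1*t2 - 3" using F0 a0 e1 e2 by simp
  have HA: "0 \<le> 3 - 5*c1 - c2 + 3*c1*c2 + 21*t1*t2 - 7*(t1 + t2 + t1*c2 - c1*t2)" using F3 a3 e1 e2 by simp
  have HB: "0 \<le> 1 - 3*c1 + c2 + c1*c2 + 7*t1*t2 + 7*(t1 + t2 + t1*c2 - c1*t2)" using F10 a10 e1 e2 by simp
  have t1: "t1 = 0" using claimA[OF e1 e2 HA G] claimB[OF e1 e2 HB G] by simp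
  have "c1^2 = 1" using e1 t1 by simp
  then have "c1 = 1 \<or> c1 = -1" by (simp add: power2_eq_1_iff)
  moreover have c2sq: "c2^2 \<le> 1" using e2 zero_le_power2[of t2] by linarith
  then have c2le: "c2 \<le> 1" using abs_square_le_1[of c2] by simp
  ultimately have c1: "c1 = 1" using G t1 by auto
  then have "c2 \<ge> 1" using HA t1 by simp
  then have c2: "c2 = 1" using c2le by simp
  then have t2: "t2 = 0" using e2 by simp
  have x1: "x1 = -1" and u1: "u1 = 0" using c1 t1 unfolding c1_def t1_def by simp_all
  have u2: "u2 = 1/4" and x2: "x2 = 3/4" using c2 t2 x1 u1 unfolding c2_def t2_def by simp_all
  show ?thesis
    unfolding z1 z2 y1 y2 x1 u1 x2 u2
    by (simp add: complex_eq_iff w_Re w_Im)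
qed


lemma smult_comp: "((c::complex) *s Z) $ i = c * Z $ i" by simp

lemma herm_smult_l: "herm (c *s Z) W = c * herm Z W"
  by (simp add: herm_def algebra_simps)
lemma herm_smult_r: "herm Z (c *s W) = cnj c * herm Z W"
  by (simp add: herm_def algebra_simps)

lemma f_smult: "f j (c *s Z) = (cmod c)^2 * f j Z"
proof (cases "j = 0")
  case True
  have cc: "c * cnj c = complex_of_real ((cmod c)^2)" by (metis complex_norm_square)
  have "herm (c *s Z) (c *s Z) = (c * cnj c) * herm Z Z"
    by (simp add: herm_smult_l herm_smult_r mult.assoc)
  then have "herm (c *s Z) (c *s Z) = complex_of_real ((cmod c)^2) * herm Z Z"
    by (simp only: cc)
  then show ?thesis using True by (simp add: f_def)
next
  case False
  then show ?thesis by (simp add: f_def herm_smult_l norm_mult power_mult_distrib algebra_simps)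
qed

lemma proj_smult: "c \<noteq> 0 \<Longrightarrow> proj (c *s Z) = proj Z"
proof -
  assume c: "c \<noteq> 0"
  show ?thesis
  proof (rule set_eqI, rule iffI)
    fix X assume "X \<in> proj (c *s Z)"
    then obtain d where d: "d \<noteq> 0" "X = d *s (c *s Z)" unfolding proj_def by auto
    then have X: "X = (d*c) *s Z" by (simp add: vector_smult_assoc)
    show "X \<in> proj Z" unfolding proj_def
      by (rule CollectI, rule exI[of _ "d*c"]) (use X c d in simp)
  next
    fix X assume "X \<in> proj Z"
    then obtain d where d: "d \<noteq> 0" "X = d *s Z" unfolding proj_def by auto
    then have "X = (d / c) *s (c *s Z)" using c by (simp add: vector_smult_assoc)
    then show "X \<in> proj (c *s Z)" unfolding proj_def
      by (intro CollectI exI[of _ "d/c"]) (use c d in simp)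
  qed
qed

lemma proj_self: "Z \<in> proj Z"
  unfolding proj_def by (rule CollectI, rule exI[of _ 1]) simp

lemma proj_eqD: "proj Z = proj W \<Longrightarrow> \<exists>c. c \<noteq> 0 \<and> W = c *s Z"
proof -
  assume "proj Z = proj W"
  then have "W \<in> proj Z" using proj_self[of W] by simp
  then show ?thesis unfolding proj_def by auto
qed

lemma w_ne1: "w \<noteq> 1"
  by (simp add: complex_eq_iff w_Re)

lemma unique_gen:
  assumes Z: "Z \<noteq> 0" and F1: "f 1 Z = 0" and F2: "f 2 Z = 0" and F0: "f 0 Z \<le> 0"
    and F3: "f 3 Z \<le> 0" and F10: "f 10 Z \<le> 0"
  shows "proj Z = proj pfix"
proof -
  define a where "a = Z$1"
  define b where "b = Z$2"
  define c where "c = Z$3"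
  have Zv: "Z = vector [a, b, c]" unfolding a_def b_def c_def by (rule vec3_expand)
  have c0: "c \<noteq> 0"
  proof
    assume c0: "c = 0"
    have "cmod a = 0" using F2 unfolding Zv f_V c0 by simp
    then have a0: "a = 0" by simp
    have "cmod ((w - 1) * b) = 0" using F1 unfolding Zv f_V c0 a0 by simp
    then have "b = 0" using w_ne1 by simp
    then show False using Z a0 c0 unfolding Zv by (simp add: vec_eq_iff forall_3)
  qed
  define V where "V = (1/c) *s Z"
  have V: "V = vector [a/c, b/c, 1]" unfolding V_def Zv scale3 using c0 by simp
  have pos: "(cmod (1/c))^2 > 0" using c0 by simp
  have G1: "f 1 V = 0" using F1 unfolding V_def f_smult by simp
  have G2': "f 2 V = 0" using F2 unfolding V_def f_smult by simp
  have G0: "f 0 V \<le> 0" using F0 pos unfolding V_def f_smult by (simp add: mult_nonneg_nonpos)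
  have G3': "f 3 V \<le> 0" using F3 pos unfolding V_def f_smult by (simp add: mult_nonneg_nonpos)
  have G10: "f 10 V \<le> 0" using F10 pos unfolding V_def f_smult by (simp add: mult_nonneg_nonpos)
  have h: "a/c = -1 \<and> b/c = (2+w)/2"
    by (rule unique_norm) (use G1 G2' G0 G3' G10 V in simp_all)
  then have "V = vector [-1, (2+w)/2, 1]" unfolding V by (simp only:)
  also have "\<dots> = (1/2) *s pfix" unfolding pfix_def scale3 by simp
  finally have "V = (1/2) *s pfix" .
  then have "proj V = proj pfix" using proj_smult[of "1/2" pfix] by simp
  moreover have "proj V = proj Z" unfolding V_def using c0 by (simp add: proj_smult)
  ultimately show ?thesis by simp
qed

lemma p2_ne0: "pfix \<noteq> 0"
  unfolding pfix_def by (simp add: vec_eq_iff forall_3)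

lemma herm_p2p2: "Re (herm pfix pfix) = -4"
  using f0_p2 by (simp add: f_def)

lemma fixed_G2: "fixed_points_H2C G2 = {proj pfix}"
proof (rule set_eqI, rule iffI)
  fix X assume "X \<in> fixed_points_H2C G2"
  then obtain Z where Z: "X = proj Z" "Z \<noteq> 0" "Re (herm Z Z) < 0" "proj (G2 *v Z) = proj Z"
    unfolding fixed_points_H2C_def by auto
  obtain c where c: "c \<noteq> 0" "Z = c *s (G2 *v Z)" using proj_eqD[OF Z(4)] by blast
  define l where "l = 1 / c"
  have l0: "l \<noteq> 0" using c unfolding l_def by simp
  have GZ: "G2 *v Z = l *s Z"
  proof -
    from c(2) have "(1/c) *s Z = (1/c) *s (c *s (G2 *v Z))" by (rule arg_cong)
    also have "\<dots> = G2 *v Z" using c(1) by (simp add: vector_smult_assoc)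
    finally show ?thesis unfolding l_def by simp
  qed
  define a where "a = Z$1"
  define b where "b = Z$2"
  define d where "d = Z$3"
  have Zv: "Z = vector [a, b, d]" unfolding a_def b_def d_def by (rule vec3_expand)
  have eqs: "2*a + (1-w)*b - d = l*a" "(-2-w)*a - b = l*b" "-a = l*d"
    using GZ unfolding Zv G2_eq mat3_vec scale3 vec3_eq by simp_all
  have poly: "d * ((l - 1) * (l*l + 1)) = 0"
    using eqs w2 by algebra
  have d0: "d \<noteq> 0"
  proof
    assume d0: "d = 0"
    then have a0: "a = 0" using eqs(3) by simp
    then have "(1-w)*b = 0" using eqs(1) d0 by simp
    then have "b = 0" using w_ne1 by simp
    then show False using Z(2) a0 d0 unfolding Zv by (simp add: vec_eq_iff forall_3)
  qed
  have "(l - 1) * (l*l + 1) = 0" using poly d0 mult_eq_0_iff by blast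
  then have "l - 1 = 0 \<or> l*l + 1 = 0" by (simp only: mult_eq_0_iff)
  then have "l = 1 \<or> l * l = -1" by (auto simp: eq_neg_iff_add_eq_0)
  then show "X \<in> {proj pfix}"
  proof
    assume l1: "l = 1"
    have ad: "a = -d" by (metis eqs(3) l1 minus_minus mult_1)
    have "2*b = (2+w)*d" using eqs(2) l1 ad by algebra
    note ad this
    then have "Z = (d/2) *s pfix" unfolding Zv pfix_def scale3 vec3_eq by (simp add: field_simps)
    then show ?thesis using Z(1) d0 by (simp add: proj_smult)
  next
    assume ll: "l * l = -1"
    have "Re l = 0"
    proof -
      have "Re (l*l) = -1" "Im (l*l) = 0" using ll by simp_all
      then have h: "(Re l)^2 - (Im l)^2 = -1" "Re l * Im l = 0" by (auto simp: power2_eq_square)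
      show ?thesis
      proof (rule ccontr)
        assume "Re l \<noteq> 0"
        then have "Im l = 0" using h(2) by simp
        then show False using h(1) zero_le_power2[of "Re l"] by simp
      qed
    qed
    have "Re (herm Z Z) = - 2 * Re l * (cmod d)^2 + (cmod b)^2"
    proof -
      have ad: "a = - (l*d)" by (metis eqs(3) minus_minus)
      show ?thesis unfolding Zv herm3 ad cmod_power2
        by (simp add: power2_eq_square algebra_simps)
    qed
    then have "Re (herm Z Z) \<ge> 0" using \<open>Re l = 0\<close> by simp
    then show ?thesis using Z(3) by simp
  qed
next
  fix X assume "X \<in> {proj pfix}"
  then show "X \<in> fixed_points_H2C G2"
    unfolding fixed_points_H2C_def using p2_ne0 herm_p2p2 G2_p2 by auto
qed


lemma fJ: "j \<in> {1,2,3,5,10,11} \<Longrightarrow> f j pfix = 0"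
  using fp2_main[of j] by auto
lemma fnJ: "j \<notin> {1,2,3,5,10,11} \<Longrightarrow> f j pfix < 0"
  using fp2_main[of j] by auto

lemma Fbar_sub: "FJ_bar {1,2} \<subseteq> {proj pfix}"
proof
  fix X assume "X \<in> FJ_bar {1,2}"
  then obtain Z where Z: "X = proj Z" "Z \<noteq> 0" "f 1 Z = 0" "f 2 Z = 0"
    "\<And>i. i \<notin> {1,2} \<Longrightarrow> f i Z \<le> 0"
    unfolding FJ_bar_def FJK_bar_def by auto
  have "proj Z = proj pfix"
    by (rule unique_gen) (use Z in auto)
  then show "X \<in> {proj pfix}" using Z by simp
qed

lemma P_in: "proj pfix \<in> FJ {1,2,3,5,10,11}"
  unfolding FJ_def FJK_def using p2_ne0 fJ fnJ by blast

lemma FJ_sub: "FJ {1,2,3,5,10,11} \<subseteq> FJ_bar {1,2}"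
proof
  fix X assume "X \<in> FJ {1,2,3,5,10,11}"
  then obtain Z where Z: "X = proj Z" "Z \<noteq> 0" "\<And>j. j \<in> {1,2,3,5,10,11} \<Longrightarrow> f j Z = 0"
    "\<And>i. i \<notin> {1,2,3,5,10,11} \<Longrightarrow> f i Z < 0"
    unfolding FJ_def FJK_def by auto
  have "\<forall>i\<in>UNIV - {1,2}. f i Z \<le> 0"
  proof
    fix i :: nat assume "i \<in> UNIV - {1,2}"
    show "f i Z \<le> 0"
    proof (cases "i \<in> {1,2,3,5,10,11}")
      case True then show ?thesis using Z(3) by simp
    next
      case False then show ?thesis using Z(4)[OF False] by simp
    qed
  qed
  then show "X \<in> FJ_bar {1,2}"
    unfolding FJ_bar_def FJK_bar_def using Z by auto
qed

lemma FJ12_empty: "FJ {1,2} = {}"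
proof (rule ccontr)
  assume "FJ {1,2} \<noteq> {}"
  then obtain X where X: "X \<in> FJ {1,2}" by blast
  then obtain Z where Z: "X = proj Z" "Z \<noteq> 0" "f 1 Z = 0" "f 2 Z = 0"
    "\<And>i. i \<notin> {1,2} \<Longrightarrow> f i Z < 0"
    unfolding FJ_def FJK_def by auto
  have "X \<in> FJ_bar {1,2}"
    unfolding FJ_bar_def FJK_bar_def using Z by (auto intro: less_imp_le)
  then have "proj Z = proj pfix" using Fbar_sub Z(1) by auto
  then obtain c where c: "c \<noteq> 0" "Z = c *s pfix" using proj_eqD by metis
  have "f 3 Z = 0" unfolding c(2) f_smult using fJ[of 3] by simp
  moreover have "f 3 Z < 0" using Z(5)[of 3] by simp
  ultimately show False by simp
qed

theorem proposition5p4: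
  shows "FJ {1, 2} = {} \<and>
    (\<exists>p2. fixed_points_H2C G2 = {p2} \<and>
          FJ_bar {1, 2} = FJ {1, 2, 3, 5, 10, 11} \<and> FJ {1, 2, 3, 5, 10, 11} = {p2})"
proof -
  have e1: "FJ {1, 2, 3, 5, 10, 11} = {proj pfix}"
    using FJ_sub Fbar_sub P_in by blast
  have e2: "FJ_bar {1, 2} = {proj pfix}"
    using FJ_sub Fbar_sub P_in by blast
  show ?thesis using FJ12_empty fixed_G2 e1 e2 by auto
qed

end
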